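(* Let $D\subset\mathscr C^r(\mathbb{S}^1)$ be a bounded open set and fix $R>0$ with $R>\|\tau'\|_\infty$ for all $\tau\in D$. Fix $\rho>0$, intervals $I_j=(a_j,b_j)$, $1\le j\le J$, covering $[\log\lambda,\log\Lambda]$ with $b_j-a_j<\rho/3$, $N=\lceil6\rho^{-1}\log\lceil2\Lambda\rceil\rceil$, and an integer $q\ge1$ with $(q+1)Ne^{-q\rho/2}<1/(4J)$. Let $\varphi_1,\dots,\varphi_m\in\mathscr C^\infty(\mathbb{S}^1)$ be functions satisfying the conclusion of Proposition 3.4 with $p=N$, $\nu=q$ (i.e. for any $x$ and $B\subset\mathcal A^q$ with $\#B\ge N(q+1)$ there is $B'\subset B$, $\#B'=N$, with $\operatorname{Jac}(G_{x,A})\ge1$ whenever $A\subset\mathcal A^n$, $n\ge q$, and $\alpha\mapsto[\alpha]_q$ is a bijection $A\to B'$). Then for every $\tau\in D$, with $\tau_{\mathbf t}=\tau+\sum_{i=1}^mt_i\varphi_i$, $\operatorname{Leb}_{\mathbb{R}^m}\{\mathbf t\in[-1,1]^m:\ \tau_{\mathbf t}\in X(n)\text{ for infinitely many }n\}=0.$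
   Context: $\mathbb{S}^1=\mathbb{R}/\mathbb{Z}$, $r\ge2$; $E:\mathbb{S}^1\to\mathbb{S}^1$ is a $\mathscr C^r$ expanding map of degree $\ell\ge2$ with $1<\lambda\le E'\le\Lambda$ and $0$ a fixed point; $\vartheta_R=R/(\lambda-1)$. Symbolic coding: $\mathcal A=\{0,\dots,\ell-1\}$; the $\ell$ points of $E^{-1}(0)$ divide $\mathbb{S}^1$ into half-open intervals $\mathcal I(j)$ each mapped bijectively onto $\mathbb{S}^1$ by $E$; for $\alpha=(\alpha_n,\dots,\alpha_1)\in\mathcal A^n$, $\mathcal I(\alpha)=\bigcap_{i=0}^{n-1}E^{-i}(\mathcal I(\alpha_{n-i}))$, $x_\alpha$ the unique point of $\mathcal I(\alpha)$ with $E^n(x_\alpha)=x$, $[\alpha]_k=(\alpha_k,\dots,\alpha_1)$. $S_n(x;\alpha;\tau)=\sum_{k=1}^n\tau'(x_{[\alpha]_k})/(E^k)'(x_{[\alpha]_k})$. $G_{x,A}(\mathbf t)=(S_n(x;\alpha;\tau_{\mathbf t}))_{\alpha\in A}$ for $A\subset\mathcal A^n$, and $\operatorname{Jac}$ of an affine map is the absolute Jacobian determinant of its linear part restricted to the orthogonal complement of its kernel if surjective, $0$ otherwise. Let $T(n)=\{x\in\mathbb{S}^1:\lceil2\Lambda\rceil^nx\in\mathbb{Z}\}$ and $\Theta(n)=\{\theta\in[0,2\pi):\lceil2\Lambda\rceil^n\theta/(2\pi)\in\mathbb{Z}\}$. $X(n)$ is the set of $\tau\in D$ for which there exist $x\in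 T(n)$, $\theta\in\Theta(n)$ with $\cos\theta\neq0$, $1\le j\le J$, a set $B\subset\mathcal A^q$ with $\#B=2(q+1)N$, and sets $\Sigma(\beta)\subset\mathcal A^n$ for $\beta\in B$ with $\#\Sigma(\beta)\ge e^{\rho n}\ell^{-q}/(2J)$, such that for all $\beta\in B$ and $\alpha\in\Sigma(\beta)$: $[\alpha]_q=\beta$, $(E^n)'(x_\alpha)\in[e^{a_jn},e^{b_jn}]$, and $|S_n(x;\alpha;\tau)-\tan\theta|\le e^{-a_jn}\vartheta_R$. *)

theory Defs
  imports "HOL-Analysis.Analysis" "HOL-Combinatorics.Permutations"
begin

text \<open>Points of the circle R/Z are represented by reals (representatives in [0,1));
functions on the circle by 1-periodic real functions.\<close>

definition periodic1 :: "(real \<Rightarrow> real) \<Rightarrow> bool" where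
  "periodic1 f \<longleftrightarrow> (\<forall>x. f (x + 1) = f x)"

definition Ck :: "nat \<Rightarrow> (real \<Rightarrow> real) \<Rightarrow> bool" where
  "Ck k f \<longleftrightarrow>
     (\<forall>j<k. \<forall>x. ((deriv ^^ j) f has_real_derivative (deriv ^^ Suc j) f x) (at x))
     \<and> continuous_on UNIV ((deriv ^^ k) f)"

definition Cr_circle :: "nat \<Rightarrow> (real \<Rightarrow> real) \<Rightarrow> bool" where
  "Cr_circle k f \<longleftrightarrow> Ck k f \<and> periodic1 f"

definition Cinf_circle :: "(real \<Rightarrow> real) \<Rightarrow> bool" where
  "Cinf_circle f \<longleftrightarrow> (\<forall>k. Cr_circle k f)"

definition cr_norm :: "nat \<Rightarrow> (real \<Rightarrow> real) \<Rightarrow> real" where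
  "cr_norm k f = (\<Sum>j\<le>k. (SUP x. \<bar>(deriv ^^ j) f x\<bar>))"

definition cr_open :: "nat \<Rightarrow> (real \<Rightarrow> real) set \<Rightarrow> bool" where
  "cr_open k D \<longleftrightarrow> D \<subseteq> {f. Cr_circle k f} \<and>
     (\<forall>f\<in>D. \<exists>e>0. \<forall>g. Cr_circle k g \<and> cr_norm k (\<lambda>y. g y - f y) < e \<longrightarrow> g \<in> D)"

definition cr_bounded :: "nat \<Rightarrow> (real \<Rightarrow> real) set \<Rightarrow> bool" where
  "cr_bounded k D \<longleftrightarrow> (\<exists>M. \<forall>f\<in>D. cr_norm k f \<le> M)"

text \<open>E given by its lift El : R -> R, El(x+1) = El x + l (degree l), C^r,
  with lam <= E' <= Lam, 1 < lam, and 0 a fixed point (El 0 integer).\<close>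
definition expanding_map :: "nat \<Rightarrow> nat \<Rightarrow> real \<Rightarrow> real \<Rightarrow> (real \<Rightarrow> real) \<Rightarrow> bool" where
  "expanding_map r l lam Lam El \<longleftrightarrow>
     Ck r El \<and> (\<forall>x. El (x + 1) = El x + real l) \<and> El 0 \<in> \<int> \<and> 1 < lam \<and>
     (\<forall>x. lam \<le> deriv El x \<and> deriv El x \<le> Lam)"

text \<open>Inverse branch: the unique point of the interval I(j) mapped by E to x.
  I(j) is the half-open interval [y_j, y_(j+1)) where y_0 = 0 < y_1 < ... are the
  preimages of 0 in [0,1), El(y_j) = El 0 + j.\<close>
definition branch :: "(real \<Rightarrow> real) \<Rightarrow> nat \<Rightarrow> real \<Rightarrow> real" where
  "branch El j x = (THE y. El y = El 0 + real j + frac x)"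

text \<open>Words alpha = (alpha_n, ..., alpha_1) are lists in this order.\<close>
fun pt :: "(real \<Rightarrow> real) \<Rightarrow> real \<Rightarrow> nat list \<Rightarrow> real" where
  "pt El x [] = x"
| "pt El x (a # as) = branch El a (pt El x as)"

definition words :: "nat \<Rightarrow> nat \<Rightarrow> nat list set" where
  "words l n = {\<alpha>. length \<alpha> = n \<and> set \<alpha> \<subseteq> {..<l}}"

definition trunc :: "nat \<Rightarrow> nat list \<Rightarrow> nat list" where
  "trunc k \<alpha> = drop (length \<alpha> - k) \<alpha>"

definition Sn :: "(real \<Rightarrow> real) \<Rightarrow> real \<Rightarrow> nat list \<Rightarrow> (real \<Rightarrow> real) \<Rightarrow> real" where
  "Sn El x \<alpha> \<tau> = (\<Sum>k=1..length \<alpha>.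
      deriv \<tau> (pt El x (trunc k \<alpha>)) / deriv (El ^^ k) (pt El x (trunc k \<alpha>)))"

definition perturb :: "(real \<Rightarrow> real) \<Rightarrow> ('m::finite \<Rightarrow> real \<Rightarrow> real) \<Rightarrow> real^'m \<Rightarrow> real \<Rightarrow> real" where
  "perturb \<tau> \<phi> t = (\<lambda>y. \<tau> y + (\<Sum>i\<in>UNIV. t $ i * \<phi> i y))"

text \<open>G_{x,A}(t) = (S_n(x;alpha;tau_t))_{alpha in A}, as a function vanishing off A.\<close>
definition Gmap :: "(real \<Rightarrow> real) \<Rightarrow> real \<Rightarrow> nat list set \<Rightarrow> (real \<Rightarrow> real)
     \<Rightarrow> ('m::finite \<Rightarrow> real \<Rightarrow> real) \<Rightarrow> real^'m \<Rightarrow> nat list \<Rightarrow> real" where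
  "Gmap El x A \<tau> \<phi> t = (\<lambda>\<alpha>. if \<alpha> \<in> A then Sn El x \<alpha> (perturb \<tau> \<phi> t) else 0)"

definition det_on :: "'a set \<Rightarrow> ('a \<Rightarrow> 'a \<Rightarrow> real) \<Rightarrow> real" where
  "det_on A g = (\<Sum>p | p permutes A. of_int (sign p) * (\<Prod>a\<in>A. g a (p a)))"

text \<open>Jacobian of an affine map G : R^m -> R^A (linear part L v = G v - G 0):
  if L is surjective, |det| of L restricted to (ker L)^perp, i.e. sqrt(det(L L^T));
  otherwise 0.\<close>
definition jac_aff :: "'a set \<Rightarrow> (real^'m::finite \<Rightarrow> 'a \<Rightarrow> real) \<Rightarrow> real" where
  "jac_aff A G =
     (let L = (\<lambda>v a. G v a - G 0 a) in
      if (\<forall>w. \<exists>v. \<forall>a\<in>A. L v a = w a)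
      then sqrt (det_on A (\<lambda>a b. \<Sum>i\<in>UNIV. L (axis i 1) a * L (axis i 1) b))
      else 0)"

definition Tset :: "real \<Rightarrow> nat \<Rightarrow> real set" where
  "Tset Lam n = {x \<in> {0..<1}. of_int \<lceil>2 * Lam\<rceil> ^ n * x \<in> \<int>}"

definition Thset :: "real \<Rightarrow> nat \<Rightarrow> real set" where
  "Thset Lam n = {\<theta> \<in> {0..<2*pi}. of_int \<lceil>2 * Lam\<rceil> ^ n * \<theta> / (2 * pi) \<in> \<int>}"

definition Xset :: "(real \<Rightarrow> real) \<Rightarrow> nat \<Rightarrow> real \<Rightarrow> real \<Rightarrow> (real \<Rightarrow> real) set \<Rightarrow> real
     \<Rightarrow> real \<Rightarrow> nat \<Rightarrow> (nat \<Rightarrow> real) \<Rightarrow> (nat \<Rightarrow> real) \<Rightarrow> nat \<Rightarrow> nat \<Rightarrow> nat \<Rightarrow> (real \<Rightarrow> real) set" where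
  "Xset El l lam Lam D R rho J a b q N n =
     {\<tau> \<in> D. \<exists>x\<in>Tset Lam n. \<exists>\<theta>\<in>Thset Lam n. cos \<theta> \<noteq> 0 \<and>
        (\<exists>j\<in>{1..J}. \<exists>B Sg. B \<subseteq> words l q \<and> card B = 2 * (q + 1) * N \<and>
           (\<forall>\<beta>\<in>B. Sg \<beta> \<subseteq> words l n \<and>
               real (card (Sg \<beta>)) \<ge> exp (rho * real n) / real l ^ q / (2 * real J)) \<and>
           (\<forall>\<beta>\<in>B. \<forall>\<alpha>\<in>Sg \<beta>. trunc q \<alpha> = \<beta> \<and>
               exp (a j * real n) \<le> deriv (El ^^ n) (pt El x \<alpha>) \<and>
               deriv (El ^^ n) (pt El x \<alpha>) \<le> exp (b j * real n) \<and>
               \<bar>Sn El x \<alpha> \<tau> - tan \<theta>\<bar> \<le> exp (- a j * real n) * (R / (lam - 1))))}"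

end

theory Submission
  imports Defs "HOL-Library.Countable"
begin

lemma periodic_int_shift:
  fixes f :: "real \<Rightarrow> 'b"
  assumes "\<And>x. f (x + 1) = f x"
  shows "f (x + of_int k) = f x"
proof -
  have nat: "f (y + real n) = f y" for y n
  proof (induction n)
    case (Suc n)
    have "f (y + real (Suc n)) = f ((y + real n) + 1)" by (simp add: algebra_simps)
    then show ?case using assms Suc by simp
  qed simp
  show ?thesis
  proof (cases "k \<ge> 0")
    case True
    then show ?thesis using nat[of x "nat k"] by simp
  next
    case False
    have "f (x + of_int k) = f (x + of_int k + real (nat (-k)))" using nat by simp
    also have "x + of_int k + real (nat (-k)) = x" using False by simp
    finally show ?thesis .
  qed
qed

locale EM =
  fixes r l :: nat and lam Lam :: real and El :: "real \<Rightarrow> real"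
  assumes r2: "r \<ge> 2" and l1: "l \<ge> 1" and E: "expanding_map r l lam Lam El"
begin

lemma lam1: "lam > 1" using E by (simp add: expanding_map_def)
lemma lamLam: "lam \<le> deriv El x" "deriv El x \<le> Lam" using E by (auto simp: expanding_map_def)
lemma El_per: "El (x + 1) = El x + real l" using E by (simp add: expanding_map_def)
lemma El0: "El 0 \<in> \<int>" using E by (simp add: expanding_map_def)

lemma Ck: "Ck r El" using E by (simp add: expanding_map_def)

lemma dEl: "(El has_real_derivative deriv El x) (at x)"
proof -
  have "0 < r" using r2 by simp
  then have "((deriv ^^ 0) El has_real_derivative (deriv ^^ Suc 0) El x) (at x)"
    using Ck unfolding Ck_def by blast
  then show ?thesis by simp
qed

lemma d2El: "(deriv El has_real_derivative deriv (deriv El) x) (at x)"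
proof -
  have "1 < r" using r2 by simp
  then have "((deriv ^^ 1) El has_real_derivative (deriv ^^ Suc 1) El x) (at x)"
    using Ck unfolding Ck_def by blast
  then show ?thesis by simp
qed

lemma cont2: "continuous_on UNIV (deriv (deriv El))"
proof (cases "r = 2")
  case True
  then show ?thesis using Ck unfolding Ck_def by (simp add: numeral_2_eq_2)
next
  case False
  then have "2 < r" using r2 by simp
  then have "\<And>x. ((deriv ^^ 2) El has_real_derivative (deriv ^^ Suc 2) El x) (at x)"
    using Ck unfolding Ck_def by blast
  then have d: "\<And>x. (deriv (deriv El) has_real_derivative (deriv ^^ 3) El x) (at x)"
    by (simp add: numeral_2_eq_2 numeral_3_eq_3)
  have "\<And>x. isCont (deriv (deriv El)) x" using DERIV_isCont[OF d] .
  then show ?thesis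
    by (simp add: continuous_at_imp_continuous_on)
qed

lemma El_per_int: "El (x + of_int k) = El x + of_int k * real l"
proof -
  have "(\<lambda>y. El y - y * real l) (x + of_int k) = (\<lambda>y. El y - y * real l) x"
    by (rule periodic_int_shift) (simp add: El_per algebra_simps)
  then show ?thesis by (simp add: algebra_simps)
qed

lemma dEl_per: "deriv El (x + 1) = deriv El x"
proof -
  have "((\<lambda>y. El (y + 1)) has_real_derivative deriv El (x + 1)) (at x)"
    using dEl[of "x+1"] by (simp add: DERIV_shift)
  moreover have "((\<lambda>y. El (y + 1)) has_real_derivative deriv El x) (at x)"
    using dEl[of x] by (simp add: El_per, auto intro!: derivative_eq_intros)
  ultimately show ?thesis using DERIV_unique by blast
qed

lemma d2El_per: "deriv (deriv El) (x + 1) = deriv (deriv El) x"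
proof -
  have "((\<lambda>y. deriv El (y + 1)) has_real_derivative deriv (deriv El) (x + 1)) (at x)"
    using d2El[of "x+1"] by (simp add: DERIV_shift)
  moreover have "((\<lambda>y. deriv El (y + 1)) has_real_derivative deriv (deriv El) x) (at x)"
    using d2El[of x] by (simp add: dEl_per)
  ultimately show ?thesis using DERIV_unique by blast
qed

lemma dEl_per_int: "deriv El (x + of_int k) = deriv El x"
  by (rule periodic_int_shift) (simp add: dEl_per)

lemma E2_bound: "\<exists>M\<ge>0. \<forall>x. \<bar>deriv (deriv El) x\<bar> \<le> M"
proof -
  have "compact ((deriv (deriv El)) ` {0..1})"
    by (rule compact_continuous_image) (use cont2 continuous_on_subset in auto)
  then have "bounded ((deriv (deriv El)) ` {0..1})" by (rule compact_imp_bounded)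
  then obtain M where M: "\<forall>y\<in>(deriv (deriv El)) ` {0..1}. norm y \<le> M"
    unfolding bounded_iff by blast
  have "\<bar>deriv (deriv El) x\<bar> \<le> M" for x
  proof -
    have "deriv (deriv El) x = deriv (deriv El) (frac x + of_int \<lfloor>x\<rfloor>)"
      by (simp add: frac_def)
    also have "\<dots> = deriv (deriv El) (frac x)"
      by (rule periodic_int_shift) (simp add: d2El_per)
    moreover have "frac x \<in> {0..1}" using frac_lt_1[of x] frac_ge_0[of x] by simp
    then have "norm (deriv (deriv El) (frac x)) \<le> M" using M by blast
    ultimately show ?thesis by simp
  qed
  moreover have "norm (deriv (deriv El) 0) \<le> M" using M by auto
  then have "M \<ge> 0" using norm_ge_zero order.trans by blast
  ultimately show ?thesis by blast
qed

lemma El_diff_ge: assumes "s \<le> t" shows "El t - El s \<ge> lam * (t - s)"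
proof (cases "s = t")
  case False
  then have "s < t" using assms by simp
  then obtain z where "El t - El s = (t - s) * deriv El z"
    using MVT2[of s t El "deriv El"] dEl by blast
  moreover have "(t - s) * lam \<le> (t - s) * deriv El z"
    using lamLam(1)[of z] \<open>s<t\<close> by (intro mult_left_mono) auto
  ultimately show ?thesis by (simp add: algebra_simps)
qed simp

lemma El_strict: "s < t \<Longrightarrow> El s < El t"
proof -
  assume st: "s < t"
  have "lam * (t - s) > 0" using lam1 st by simp
  then show ?thesis using El_diff_ge[of s t] st by linarith
qed

lemma El_mono_iff: "El s < El t \<longleftrightarrow> s < t"
proof
  assume a: "El s < El t"
  show "s < t"
  proof (rule ccontr)
    assume "\<not> s < t"
    then have "t < s \<or> t = s" by auto
    then show False using El_strict[of t s] a by auto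
  qed
qed (rule El_strict)

lemma El_inj: "El s = El t \<longleftrightarrow> s = t"
proof
  assume a: "El s = El t"
  show "s = t"
  proof (rule ccontr)
    assume "s \<noteq> t"
    then have "t < s \<or> s < t" by auto
    then show False using El_strict[of t s] El_strict[of s t] a by auto
  qed
qed simp

lemma El_surj: "\<exists>y. El y = v"
proof -
  define d where "d = \<bar>v - El 0\<bar>"
  have d0: "d \<ge> 0" unfolding d_def by simp
  have "lam * d \<ge> 1 * d" using lam1 d0 by (intro mult_right_mono) auto
  moreover have "El 0 - El (-d) \<ge> lam * d" using El_diff_ge[of "-d" 0] d0 by simp
  moreover have "El d - El 0 \<ge> lam * d" using El_diff_ge[of 0 d] d0 by simp
  moreover have "v - El 0 \<le> d" "El 0 - v \<le> d" unfolding d_def by auto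
  ultimately have a: "El (-d) \<le> v" and b: "v \<le> El d" by linarith+
  have c: "\<forall>x. -d \<le> x \<and> x \<le> d \<longrightarrow> isCont El x"
    using dEl DERIV_isCont by blast
  have "-d \<le> d" using d0 by simp
  from IVT[OF a b this c] show ?thesis by blast
qed

definition hh :: "nat \<Rightarrow> real \<Rightarrow> real" where
  "hh a u = (THE y. El y = El 0 + real a + u)"

lemma El_hh: "El (hh a u) = El 0 + real a + u"
proof -
  obtain y where y: "El y = El 0 + real a + u" using El_surj by blast
  have "\<exists>!y. El y = El 0 + real a + u"
  proof (rule ex1I[of _ y])
    fix z assume "El z = El 0 + real a + u"
    then have "El z = El y" using y by simp
    then show "z = y" by (simp only: El_inj)
  qed (rule y)
  then show ?thesis unfolding hh_def by (rule theI')
qed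

lemma hh_eq: "El y = El 0 + real a + u \<Longrightarrow> hh a u = y"
proof -
  assume "El y = El 0 + real a + u"
  then have "El (hh a u) = El y" by (simp add: El_hh)
  then show ?thesis by (simp only: El_inj)
qed

lemma branch_hh: "branch El j x = hh j (frac x)"
  unfolding branch_def hh_def by simp

lemma hh_contr: "\<bar>hh a u - hh a v\<bar> \<le> \<bar>u - v\<bar> / lam"
proof -
  have key: "lam * \<bar>s - t\<bar> \<le> \<bar>El s - El t\<bar>" for s t
  proof (cases "s \<le> t")
    case True
    have "\<bar>s - t\<bar> = t - s" using True by simp
    moreover have "El t - El s \<le> \<bar>El s - El t\<bar>" by simp
    moreover have "lam * \<bar>s - t\<bar> = lam * (t - s)" using True by simp
    ultimately show ?thesis using El_diff_ge[OF True] by linarith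
  next
    case False
    then have F: "t \<le> s" by simp
    have "\<bar>s - t\<bar> = s - t" using F by simp
    moreover have "El s - El t \<le> \<bar>El s - El t\<bar>" by simp
    moreover have "lam * \<bar>s - t\<bar> = lam * (s - t)" using F by simp
    ultimately show ?thesis using El_diff_ge[OF F] by linarith
  qed
  have "El (hh a u) - El (hh a v) = u - v" by (simp add: El_hh)
  then have "lam * \<bar>hh a u - hh a v\<bar> \<le> \<bar>u - v\<bar>" using key[of "hh a u" "hh a v"] by simp
  then have "\<bar>hh a u - hh a v\<bar> * lam \<le> \<bar>u - v\<bar>" by (simp add: mult.commute)
  then show ?thesis using lam1 by (simp add: pos_le_divide_eq)
qed

lemma hh_strict: "u < v \<Longrightarrow> hh a u < hh a v"
proof -
  assume "u < v"
  then have "El (hh a u) < El (hh a v)" by (simp add: El_hh)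
  then show ?thesis using El_mono_iff by blast
qed

lemma hh_unit: assumes "u \<in> {0..<1}" "a < l" shows "hh a u \<in> {0..<1}"
proof -
  have u: "0 \<le> u" "u < 1" using assms(1) by auto
  have h: "El (hh a u) = El 0 + real a + u" by (rule El_hh)
  have "El 0 \<le> El (hh a u)" using u h by simp
  then have 1: "0 \<le> hh a u" using El_mono_iff[of "hh a u" 0] by linarith
  have "a + 1 \<le> l" using assms(2) by simp
  then have "real a + 1 \<le> real l" by linarith
  moreover have "El 1 = El 0 + real l" using El_per[of 0] by simp
  ultimately have "El (hh a u) < El 1" using u h by linarith
  then have 2: "hh a u < 1" using El_mono_iff[of "hh a u" 1] by blast
  show ?thesis using 1 2 by simp
qed

end

lemma finite_words: "finite (words l n)"
proof -
  have "words l n = {xs. set xs \<subseteq> {..<l} \<and> length xs = n}" unfolding words_def by auto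
  then show ?thesis using finite_lists_length_eq[of "{..<l}" n] by simp
qed

lemma words_Suc: "words l (Suc n) = (\<lambda>(as, b). as @ [b]) ` (words l n \<times> {..<l})"
proof
  show "words l (Suc n) \<subseteq> (\<lambda>(as, b). as @ [b]) ` (words l n \<times> {..<l})"
  proof
    fix xs assume xs: "xs \<in> words l (Suc n)"
    then have "xs \<noteq> []" unfolding words_def by auto
    then have e: "xs = butlast xs @ [last xs]" by simp
    have "butlast xs \<in> words l n" using xs unfolding words_def
      by (auto dest: in_set_butlastD)
    moreover have "last xs < l" using last_in_set[OF \<open>xs \<noteq> []\<close>] xs unfolding words_def by auto
    ultimately show "xs \<in> (\<lambda>(as, b). as @ [b]) ` (words l n \<times> {..<l})"
      using e by (intro image_eqI[of _ _ "(butlast xs, last xs)"]) auto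
  qed
qed (auto simp: words_def)

lemma words_Suc_inj: "inj_on (\<lambda>(as, b). as @ [b]) (words l n \<times> {..<l})"
  by (auto simp: inj_on_def)

context EM begin

fun Hs :: "real \<Rightarrow> nat list \<Rightarrow> real" where
  "Hs y [] = y"
| "Hs y (a # as) = hh a (Hs y as)"

lemma pt_Hs: "x \<in> {0..<1} \<Longrightarrow> set \<alpha> \<subseteq> {..<l} \<Longrightarrow> pt El x \<alpha> = Hs x \<alpha> \<and> Hs x \<alpha> \<in> {0..<1}"
proof (induction \<alpha>)
  case (Cons a as)
  then have IH: "pt El x as = Hs x as" "Hs x as \<in> {0..<1}" by auto
  have "frac (Hs x as) = Hs x as" using IH(2) by (simp add: frac_eq)
  then have "pt El x (a # as) = Hs x (a # as)" using IH by (simp add: branch_hh)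
  moreover have "Hs x (a # as) \<in> {0..<1}" using hh_unit[OF IH(2)] Cons.prems(2) by simp
  ultimately show ?case by simp
qed simp

lemma Hs_append: "Hs y (xs @ ys) = Hs (Hs y ys) xs"
  by (induction xs) auto

lemma Hs_contr: "\<bar>Hs y \<alpha> - Hs z \<alpha>\<bar> \<le> \<bar>y - z\<bar> / lam ^ length \<alpha>"
proof (induction \<alpha>)
  case (Cons a as)
  have "\<bar>Hs y (a # as) - Hs z (a # as)\<bar> \<le> \<bar>Hs y as - Hs z as\<bar> / lam"
    using hh_contr by simp
  also have "\<dots> \<le> (\<bar>y - z\<bar> / lam ^ length as) / lam"
    using Cons lam1 by (intro divide_right_mono) auto
  finally show ?case by (simp add: field_simps)
qed simp

lemma Hs_strict: "y < z \<Longrightarrow> Hs y \<alpha> < Hs z \<alpha>"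
  by (induction \<alpha>) (auto intro: hh_strict)

lemma Hs_cont: "continuous_on UNIV (\<lambda>y. Hs y \<alpha>)"
proof (rule lipschitz_on_continuous_on)
  show "(1 / lam ^ length \<alpha>)-lipschitz_on UNIV (\<lambda>y. Hs y \<alpha>)"
  proof (rule lipschitz_onI)
    fix y z :: real
    show "dist (Hs y \<alpha>) (Hs z \<alpha>) \<le> 1 / lam ^ length \<alpha> * dist y z"
      using Hs_contr[of y \<alpha> z] by (simp add: dist_real_def)
  next
    show "0 \<le> 1 / lam ^ length \<alpha>" using lam1 by simp
  qed
qed

lemma El0_int: "El 0 = of_int \<lfloor>El 0\<rfloor>"
  using El0 by (metis Ints_cases floor_of_int)

lemma El_hh_int: "El (hh a u) = u + of_int (\<lfloor>El 0\<rfloor> + int a)"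
  using El_hh[of a u] El0_int by simp

lemma El_int': "El (x + of_int k) = El x + of_int (k * int l)"
  using El_per_int[of x k] by simp

lemma Elpow_shift: "(El ^^ n) (x + of_int k) = (El ^^ n) x + of_int (k * int l ^ n)"
proof (induction n)
  case (Suc n)
  have "(El ^^ Suc n) (x + of_int k) = El ((El ^^ n) x + of_int (k * int l ^ n))"
    using Suc by simp
  also have "\<dots> = El ((El ^^ n) x) + of_int (k * int l ^ n * int l)"
    by (rule El_int')
  finally show ?case by (simp add: algebra_simps)
qed simp

definition Dn :: "nat \<Rightarrow> real \<Rightarrow> real" where
  "Dn n x = (\<Prod>k<n. deriv El ((El ^^ k) x))"

lemma Dn_Suc: "Dn (Suc n) x = Dn n (El x) * deriv El x"
proof -
  have "Dn (Suc n) x = deriv El ((El ^^ 0) x) * (\<Prod>k<n. deriv El ((El ^^ Suc k) x))"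
    unfolding Dn_def by (rule prod.lessThan_Suc_shift)
  also have "(\<Prod>k<n. deriv El ((El ^^ Suc k) x)) = Dn n (El x)"
    unfolding Dn_def by (simp add: funpow_Suc_right del: funpow.simps)
  finally show ?thesis by simp
qed

lemma dElpow: "((El ^^ n) has_real_derivative Dn n x) (at x)"
proof (induction n arbitrary: x)
  case 0
  then show ?case by (simp add: Dn_def)
next
  case (Suc n)
  have e: "El ^^ Suc n = (El ^^ n) \<circ> El" by (rule funpow_Suc_right)
  show ?case unfolding e Dn_Suc by (rule DERIV_chain[OF Suc dEl])
qed

lemma deriv_Elpow: "deriv (El ^^ n) x = Dn n x"
  using dElpow DERIV_imp_deriv by blast

lemma Dn_shift: "Dn n (x + of_int k) = Dn n x"
  unfolding Dn_def by (intro prod.cong refl) (simp only: Elpow_shift dEl_per_int)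

lemma Dn_ge: "Dn n x \<ge> lam ^ n"
proof -
  have "(\<Prod>k<n. lam) \<le> Dn n x"
    unfolding Dn_def using lam1 lamLam(1) by (intro prod_mono) auto
  then show ?thesis by simp
qed

lemma Dn_pos: "Dn n x > 0"
  using Dn_ge[of n x] lam1 by (meson order_less_le_trans zero_less_power less_trans zero_less_one)

definition Q :: "real \<Rightarrow> nat list \<Rightarrow> real" where
  "Q y \<alpha> = Dn (length \<alpha>) (Hs y \<alpha>)"

lemma Q_pos: "Q y \<alpha> > 0" unfolding Q_def by (rule Dn_pos)

lemma Q_cons: "Q y (a # as) = Q y as * deriv El (Hs y (a # as))"
proof -
  have "Q y (a # as) = Dn (length as) (El (hh a (Hs y as))) * deriv El (hh a (Hs y as))"
    unfolding Q_def by (simp add: Dn_Suc)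
  also have "Dn (length as) (El (hh a (Hs y as))) = Dn (length as) (Hs y as)"
    by (simp only: El_hh_int Dn_shift)
  finally show ?thesis by (simp add: Q_def)
qed

lemma Elpow_Hs_diff: "(El ^^ length \<alpha>) (Hs y \<alpha>) - (El ^^ length \<alpha>) (Hs z \<alpha>) = y - z"
proof (induction \<alpha>)
  case (Cons a as)
  have e: "(El ^^ Suc n) w = (El ^^ n) (El w)" for n w
    by (simp add: funpow_Suc_right del: funpow.simps)
  have f: "(El ^^ Suc (length as)) (hh a w) = (El ^^ length as) w + of_int ((\<lfloor>El 0\<rfloor> + int a) * int l ^ length as)" for w
    by (simp only: e El_hh_int Elpow_shift)
  show ?case using Cons by (simp only: length_Cons Hs.simps f)
qed simp

end

lemma mvt_any:
  fixes f f' :: "real \<Rightarrow> real"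
  assumes d: "\<And>x. (f has_real_derivative f' x) (at x)"
  shows "\<exists>z. f t - f s = (t - s) * f' z"
proof -
  consider "s < t" | "s = t" | "t < s" by linarith
  then show ?thesis
  proof cases
    case 1 then show ?thesis using MVT2[of s t f f'] d by blast
  next
    case 2 then show ?thesis by simp
  next
    case 3
    then obtain z where "f s - f t = (s - t) * f' z" using MVT2[of t s f f'] d by blast
    then have "f t - f s = (t - s) * f' z" by (simp add: algebra_simps)
    then show ?thesis by blast
  qed
qed

context EM begin

lemma dEl_lip_ex: "\<exists>M. M \<ge> 0 \<and> (\<forall>s t. \<bar>deriv El s - deriv El t\<bar> \<le> M * \<bar>s - t\<bar>)"
proof -
  obtain M where M: "M \<ge> 0" "\<forall>x. \<bar>deriv (deriv El) x\<bar> \<le> M" using E2_bound by blast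
  have "\<bar>deriv El s - deriv El t\<bar> \<le> M * \<bar>s - t\<bar>" for s t
  proof -
    obtain z where z: "deriv El s - deriv El t = (s - t) * deriv (deriv El) z"
      using mvt_any[of "deriv El" "deriv (deriv El)" s t] d2El by blast
    have "\<bar>deriv El s - deriv El t\<bar> = \<bar>s - t\<bar> * \<bar>deriv (deriv El) z\<bar>"
      unfolding z by (simp add: abs_mult)
    also have "\<dots> \<le> \<bar>s - t\<bar> * M" using M by (intro mult_left_mono) auto
    finally show ?thesis by (simp add: mult.commute)
  qed
  then show ?thesis using M by blast
qed

definition Mb :: real where
  "Mb = (SOME M. M \<ge> 0 \<and> (\<forall>s t. \<bar>deriv El s - deriv El t\<bar> \<le> M * \<bar>s - t\<bar>))"

lemma Mb: "Mb \<ge> 0" "\<bar>deriv El s - deriv El t\<bar> \<le> Mb * \<bar>s - t\<bar>"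
  using someI_ex[OF dEl_lip_ex] unfolding Mb_def[symmetric] by auto

lemma dEl_ratio: "deriv El s \<le> exp (Mb / lam * \<bar>s - t\<bar>) * deriv El t"
proof -
  define x where "x = Mb / lam * \<bar>s - t\<bar>"
  have lam0: "lam > 0" using lam1 by simp
  have x0: "x \<ge> 0" unfolding x_def using Mb(1) lam0 by simp
  have a1: "deriv El s \<le> deriv El t + Mb * \<bar>s - t\<bar>" using Mb(2)[of s t] by linarith
  have a2: "Mb * \<bar>s - t\<bar> = x * lam" unfolding x_def using lam0 by simp
  have a3: "x * lam \<le> x * deriv El t" using lamLam(1)[of t] x0 by (intro mult_left_mono) auto
  have a4: "deriv El t + x * deriv El t = (1 + x) * deriv El t" by (simp add: algebra_simps)
  have a5: "(1 + x) * deriv El t \<le> exp x * deriv El t"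
    using exp_ge_add_one_self_aux[OF x0] lamLam(1)[of t] lam0 by (intro mult_right_mono) auto
  from a1 a2 a3 a4 a5 have "deriv El s \<le> exp x * deriv El t" by linarith
  then show ?thesis unfolding x_def .
qed

lemma geom_sum: "(\<Sum>k<n. (1/lam) ^ Suc k) * (lam - 1) = 1 - (1/lam) ^ n"
proof (induction n)
  case (Suc n)
  have lam0: "lam \<noteq> 0" using lam1 by simp
  have "(1/lam) ^ Suc n * lam = (1/lam) ^ n * ((1/lam) * lam)" by (simp add: power_Suc2 mult.assoc)
  also have "(1/lam) * lam = 1" using lam0 by simp
  finally have e: "(1/lam) ^ Suc n * lam = (1/lam) ^ n" by simp
  have "(\<Sum>k<Suc n. (1/lam) ^ Suc k) * (lam - 1)
        = (\<Sum>k<n. (1/lam) ^ Suc k) * (lam - 1) + (1/lam) ^ Suc n * lam - (1/lam) ^ Suc n"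
    by (simp only: sum.lessThan_Suc distrib_right right_diff_distrib mult_1_right add_diff_eq)
  also have "\<dots> = 1 - (1/lam) ^ Suc n" using Suc.IH e by linarith
  finally show ?case .
qed simp

lemma geom_le: "(\<Sum>k<n. (1/lam) ^ Suc k) \<le> 1 / (lam - 1)"
proof -
  have "(\<Sum>k<n. (1/lam) ^ Suc k) * (lam - 1) \<le> 1" using geom_sum lam1 by simp
  then show ?thesis using lam1 by (simp add: pos_le_divide_eq)
qed

lemma distort: "\<bar>y - z\<bar> \<le> 1 \<Longrightarrow> Q y \<alpha> \<le> exp (Mb / lam * (\<Sum>k<length \<alpha>. (1/lam) ^ Suc k)) * Q z \<alpha>"
proof (induction \<alpha>)
  case Nil
  then show ?case by (simp add: Q_def Dn_def)
next
  case (Cons a as)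
  define n where "n = length as"
  define s where "s = Hs y (a # as)"
  define t where "t = Hs z (a # as)"
  have lam0: "lam > 0" using lam1 by simp
  have "\<bar>s - t\<bar> \<le> \<bar>y - z\<bar> / lam ^ Suc n" unfolding s_def t_def n_def
    using Hs_contr[of y "a#as" z] by simp
  also have "\<dots> \<le> 1 / lam ^ Suc n" using Cons.prems lam0 by (intro divide_right_mono) auto
  also have "\<dots> = (1/lam) ^ Suc n" by (simp add: power_one_over)
  finally have st: "\<bar>s - t\<bar> \<le> (1/lam) ^ Suc n" .
  have "deriv El s \<le> exp (Mb / lam * \<bar>s - t\<bar>) * deriv El t" by (rule dEl_ratio)
  also have "\<dots> \<le> exp (Mb / lam * (1/lam) ^ Suc n) * deriv El t"
  proof -
    have "Mb / lam * \<bar>s - t\<bar> \<le> Mb / lam * (1/lam) ^ Suc n"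
      using st Mb(1) lam0 by (intro mult_left_mono) auto
    then have "exp (Mb / lam * \<bar>s - t\<bar>) \<le> exp (Mb / lam * (1/lam) ^ Suc n)" by simp
    then show ?thesis using lamLam(1)[of t] lam0 by (intro mult_right_mono) auto
  qed
  finally have 1: "deriv El s \<le> exp (Mb / lam * (1/lam) ^ Suc n) * deriv El t" .
  have 2: "Q y as \<le> exp (Mb / lam * (\<Sum>k<n. (1/lam) ^ Suc k)) * Q z as"
    using Cons unfolding n_def by simp
  have "Q y (a # as) = Q y as * deriv El s" unfolding s_def by (rule Q_cons)
  also have "\<dots> \<le> (exp (Mb / lam * (\<Sum>k<n. (1/lam) ^ Suc k)) * Q z as) *
                   (exp (Mb / lam * (1/lam) ^ Suc n) * deriv El t)"
    using 1 2 Q_pos[of y as] lamLam(1)[of s] lam0 by (intro mult_mono) auto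
  also have "\<dots> = exp (Mb / lam * (\<Sum>k<n. (1/lam) ^ Suc k) + Mb / lam * (1/lam) ^ Suc n) *
                   (Q z as * deriv El t)"
    by (simp add: exp_add algebra_simps)
  also have "Mb / lam * (\<Sum>k<n. (1/lam) ^ Suc k) + Mb / lam * (1/lam) ^ Suc n
             = Mb / lam * (\<Sum>k<length (a # as). (1/lam) ^ Suc k)"
    unfolding n_def by (simp add: algebra_simps)
  also have "Q z as * deriv El t = Q z (a # as)" unfolding t_def by (rule Q_cons[symmetric])
  finally show ?case .
qed

definition Cd :: real where "Cd = exp (Mb / lam * (1 / (lam - 1)))"

lemma Cd_pos: "Cd > 0" unfolding Cd_def by simp

lemma distortC: "\<bar>y - z\<bar> \<le> 1 \<Longrightarrow> Q y \<alpha> \<le> Cd * Q z \<alpha>"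
proof -
  assume yz: "\<bar>y - z\<bar> \<le> 1"
  have lam0: "lam > 0" using lam1 by simp
  have "Mb / lam * (\<Sum>k<length \<alpha>. (1/lam) ^ Suc k) \<le> Mb / lam * (1 / (lam - 1))"
    using geom_le Mb(1) lam0 by (intro mult_left_mono) auto
  then have "exp (Mb / lam * (\<Sum>k<length \<alpha>. (1/lam) ^ Suc k)) \<le> Cd" unfolding Cd_def by simp
  then have "exp (Mb / lam * (\<Sum>k<length \<alpha>. (1/lam) ^ Suc k)) * Q z \<alpha> \<le> Cd * Q z \<alpha>"
    using Q_pos[of z \<alpha>] by (intro mult_right_mono) auto
  then show ?thesis using distort[OF yz, of \<alpha>] by linarith
qed

lemma hh_Suc: "hh b 1 = hh (Suc b) 0"
  by (rule hh_eq) (simp add: El_hh)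

lemma hh_l: "hh l 0 = 1"
  by (rule hh_eq) (simp add: El_per[of 0, simplified])

lemma hh_00: "hh 0 0 = 0"
  by (rule hh_eq) simp

lemma Hs_tele: "(\<Sum>\<alpha>\<in>words l n. Hs 1 \<alpha> - Hs 0 \<alpha>) = 1"
proof (induction n)
  case 0
  have "words l 0 = {[]}" unfolding words_def by auto
  then show ?case by simp
next
  case (Suc n)
  define g where "g = (\<lambda>as b. Hs (hh b 1) as - Hs (hh b 0) as)"
  have "(\<Sum>\<alpha>\<in>words l (Suc n). Hs 1 \<alpha> - Hs 0 \<alpha>)
      = (\<Sum>p\<in>words l n \<times> {..<l}. g (fst p) (snd p))"
    unfolding words_Suc g_def by (subst sum.reindex[OF words_Suc_inj]) (simp add: case_prod_beta Hs_append)
  also have "\<dots> = (\<Sum>as\<in>words l n. \<Sum>b<l. g as b)"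
    by (simp add: sum.cartesian_product split_beta)
  also have "\<dots> = (\<Sum>as\<in>words l n. \<Sum>b<l. Hs (hh b 1) as - Hs (hh b 0) as)"
    unfolding g_def ..
  also have "\<dots> = (\<Sum>as\<in>words l n. Hs 1 as - Hs 0 as)"
  proof (rule sum.cong[OF refl])
    fix as
    have "(\<Sum>b<l. Hs (hh b 1) as - Hs (hh b 0) as) = (\<Sum>b<l. Hs (hh (Suc b) 0) as - Hs (hh b 0) as)"
      by (simp add: hh_Suc)
    also have "\<dots> = Hs (hh l 0) as - Hs (hh 0 0) as"
      by (rule sum_lessThan_telescope)
    finally show "(\<Sum>b<l. Hs (hh b 1) as - Hs (hh b 0) as) = Hs 1 as - Hs 0 as"
      by (simp add: hh_l hh_00)
  qed
  finally show ?case using Suc by simp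
qed

lemma Q_mvt: "\<exists>y\<in>{0..1}. Q y \<alpha> * (Hs 1 \<alpha> - Hs 0 \<alpha>) = 1"
proof -
  define n where "n = length \<alpha>"
  have pq: "Hs 0 \<alpha> < Hs 1 \<alpha>" by (rule Hs_strict) simp
  obtain z where z: "Hs 0 \<alpha> < z" "z < Hs 1 \<alpha>"
    "(El ^^ n) (Hs 1 \<alpha>) - (El ^^ n) (Hs 0 \<alpha>) = (Hs 1 \<alpha> - Hs 0 \<alpha>) * Dn n z"
    using MVT2[OF pq, of "El ^^ n" "Dn n"] dElpow by blast
  have "(El ^^ n) (Hs 1 \<alpha>) - (El ^^ n) (Hs 0 \<alpha>) = 1"
    unfolding n_def using Elpow_Hs_diff[of \<alpha> 1 0] by simp
  then have 1: "(Hs 1 \<alpha> - Hs 0 \<alpha>) * Dn n z = 1" using z(3) by simp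
  have c: "\<forall>y. 0 \<le> y \<and> y \<le> 1 \<longrightarrow> isCont (\<lambda>y. Hs y \<alpha>) y"
    using Hs_cont[of \<alpha>] by (simp add: continuous_on_eq_continuous_at)
  obtain y where y: "0 \<le> y" "y \<le> 1" "Hs y \<alpha> = z"
    using IVT[of "\<lambda>y. Hs y \<alpha>" 0 z 1] z(1,2) c by auto
  have "Q y \<alpha> = Dn n z" unfolding Q_def n_def using y(3) by simp
  then show ?thesis using 1 y(1,2) by (intro bexI[of _ y]) (auto simp: mult.commute)
qed

lemma sum_invQ: assumes "x \<in> {0..1}" shows "(\<Sum>\<alpha>\<in>words l n. 1 / Q x \<alpha>) \<le> Cd"
proof -
  have "1 / Q x \<alpha> \<le> Cd * (Hs 1 \<alpha> - Hs 0 \<alpha>)" for \<alpha>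
  proof -
    obtain y where y: "y \<in> {0..1}" "Q y \<alpha> * (Hs 1 \<alpha> - Hs 0 \<alpha>) = 1" using Q_mvt by blast
    have "\<bar>y - x\<bar> \<le> 1" using y(1) assms by auto
    then have le: "Q y \<alpha> \<le> Cd * Q x \<alpha>" by (rule distortC)
    have "1 / Q x \<alpha> = Cd / (Cd * Q x \<alpha>)" using Cd_pos Q_pos[of x \<alpha>] by simp
    also have "\<dots> \<le> Cd / Q y \<alpha>"
      using le Cd_pos Q_pos[of x \<alpha>] Q_pos[of y \<alpha>] by (intro divide_left_mono) auto
    also have "Cd / Q y \<alpha> = Cd * (Hs 1 \<alpha> - Hs 0 \<alpha>)"
      using y(2) Q_pos[of y \<alpha>] by (simp add: field_simps)
    finally show ?thesis .
  qed
  then have "(\<Sum>\<alpha>\<in>words l n. 1 / Q x \<alpha>) \<le> (\<Sum>\<alpha>\<in>words l n. Cd * (Hs 1 \<alpha> - Hs 0 \<alpha>))"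
    by (intro sum_mono) auto
  also have "\<dots> = Cd" by (simp add: sum_distrib_left[symmetric] Hs_tele)
  finally show ?thesis .
qed

lemma count_le:
  assumes x: "x \<in> {0..<1}" and B: "B > 0"
  shows "real (card {\<alpha>\<in>words l n. deriv (El ^^ n) (pt El x \<alpha>) \<le> B}) \<le> B * Cd"
proof -
  define S where "S = {\<alpha>\<in>words l n. deriv (El ^^ n) (pt El x \<alpha>) \<le> B}"
  have fin: "finite (words l n)" by (rule finite_words)
  have SW: "S \<subseteq> words l n" unfolding S_def by auto
  have "1 \<le> B * (1 / Q x \<alpha>)" if "\<alpha> \<in> S" for \<alpha>
  proof -
    have w: "length \<alpha> = n" "set \<alpha> \<subseteq> {..<l}" using that unfolding S_def words_def by auto
    have "deriv (El ^^ n) (pt El x \<alpha>) = Q x \<alpha>"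
      using pt_Hs[OF x w(2)] w(1) by (simp add: Q_def deriv_Elpow)
    then have "Q x \<alpha> \<le> B" using that unfolding S_def by simp
    then show ?thesis using Q_pos[of x \<alpha>] by (simp add: field_simps)
  qed
  then have "real (card S) \<le> (\<Sum>\<alpha>\<in>S. B * (1 / Q x \<alpha>))"
    using sum_mono[of S "\<lambda>_. 1::real"] by simp
  also have "\<dots> \<le> (\<Sum>\<alpha>\<in>words l n. B * (1 / Q x \<alpha>))"
  proof (rule sum_mono2[OF fin SW])
    fix b show "0 \<le> B * (1 / Q x b)" using B Q_pos[of x b] by simp
  qed
  also have "\<dots> = B * (\<Sum>\<alpha>\<in>words l n. 1 / Q x \<alpha>)" by (simp add: sum_distrib_left)
  also have "\<dots> \<le> B * Cd" using sum_invQ[of x n] x B by (intro mult_left_mono) auto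
  finally show ?thesis unfolding S_def .
qed

end

lemma det_block:
  fixes M :: "real^'n::finite^'n"
  assumes z1: "\<And>i k. i \<in> S \<Longrightarrow> k \<notin> S \<Longrightarrow> M$i$k = 0"
      and z2: "\<And>i k. i \<notin> S \<Longrightarrow> k \<in> S \<Longrightarrow> M$i$k = 0"
      and d: "\<And>i k. i \<notin> S \<Longrightarrow> k \<notin> S \<Longrightarrow> M$i$k = (if i = k then 1 else 0)"
  shows "det M = det_on S (\<lambda>i k. M$i$k)"
proof -
  have fin: "finite {p. p permutes (UNIV::'n set)}" by (rule finite_permutations) simp
  have sub: "{p. p permutes S} \<subseteq> {p. p permutes (UNIV::'n set)}"
    using permutes_subset by blast
  have zero: "of_int (sign p) * (\<Prod>i\<in>UNIV. M$i$p i) = 0"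
    if p: "p \<in> {p. p permutes (UNIV::'n set)} - {p. p permutes S}" for p
  proof -
    have pU: "p permutes (UNIV::'n set)" using p by simp
    have "\<exists>i. i \<notin> S \<and> p i \<noteq> i"
    proof (rule ccontr)
      assume "\<not> ?thesis"
      then have "\<forall>i. i \<notin> S \<longrightarrow> p i = i" by blast
      then have "p permutes S" using pU unfolding permutes_def by blast
      then show False using p by simp
    qed
    then obtain i where i: "i \<notin> S" "p i \<noteq> i" by blast
    have "M$i$p i = 0"
    proof (cases "p i \<in> S")
      case True then show ?thesis using z2[OF i(1)] by simp
    next
      case False then show ?thesis using d[OF i(1) False] i(2) by simp
    qed
    then have "(\<Prod>i\<in>UNIV. M$i$p i) = 0" by (intro prod_zero) auto
    then show ?thesis by simp
  qed
  have "(\<Sum>p\<in>{p. p permutes (UNIV::'n set)}. of_int (sign p) * (\<Prod>i\<in>UNIV. M$i$p i))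
     = (\<Sum>p\<in>{p. p permutes S}. of_int (sign p) * (\<Prod>i\<in>UNIV. M$i$p i))"
    by (rule sum.mono_neutral_right[OF fin sub]) (use zero in blast)
  then have "det M = (\<Sum>p\<in>{p. p permutes S}. of_int (sign p) * (\<Prod>i\<in>UNIV. M$i$p i))"
    unfolding det_def by simp
  also have "\<dots> = (\<Sum>p\<in>{p. p permutes S}. of_int (sign p) * (\<Prod>i\<in>S. M$i$p i))"
  proof (rule sum.cong[OF refl])
    fix p assume "p \<in> {p. p permutes S}"
    then have pS: "p permutes S" by simp
    have "(\<Prod>i\<in>UNIV. M$i$p i) = (\<Prod>i\<in>S. M$i$p i)"
    proof (rule prod.mono_neutral_right)
      show "\<forall>i\<in>UNIV - S. M$i$p i = 1"
        using d permutes_not_in[OF pS] by auto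
    qed auto
    then show "of_int (sign p) * (\<Prod>i\<in>UNIV. M$i$p i) = of_int (sign p) * (\<Prod>i\<in>S. M$i$p i)"
      by simp
  qed
  finally show ?thesis unfolding det_on_def by simp
qed

lemma det_on_reindex:
  fixes f :: "'a \<Rightarrow> 'b"
  assumes bij: "bij_betw f A B" and fin: "finite A"
  shows "det_on B G = det_on A (\<lambda>a b. G (f a) (f b))"
proof -
  define f' where "f' = inv_into A f"
  have f'f: "x \<in> A \<Longrightarrow> f' (f x) = x" for x
    unfolding f'_def using bij bij_betw_inv_into_left by metis
  have ff': "y \<in> B \<Longrightarrow> f (f' y) = y" for y
    unfolding f'_def using bij bij_betw_inv_into_right by metis
  have f'B: "y \<in> B \<Longrightarrow> f' y \<in> A" for y
    unfolding f'_def using bij bij_betwE bij_betw_inv_into by metis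
  have fA: "x \<in> A \<Longrightarrow> f x \<in> B" for x using bij bij_betwE by metis
  define tr where "tr = (\<lambda>p x. if x \<in> B then f (p (f' x)) else x)"
  define tr' where "tr' = (\<lambda>q x. if x \<in> A then f' (q (f x)) else x)"
  have trP: "tr p permutes B" and sgn: "sign (tr p) = sign p" if "p permutes A" for p
  proof -
    interpret permutes_bij_finite p A B f f' "tr p"
      by unfold_locales (use that bij fin f'f in \<open>auto simp: tr_def\<close>)
    show "tr p permutes B" by (rule permutes_p')
    show "sign (tr p) = sign p" by (rule sign_p')
  qed
  have tr'P: "tr' q permutes A" if "q permutes B" for q
  proof -
    have bijf': "bij_betw f' B A"
      unfolding f'_def by (rule bij_betw_inv_into[OF bij])
    interpret permutes_bij q B A f' f "tr' q"
      by unfold_locales (use that bijf' ff' in \<open>auto simp: tr'_def\<close>)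
    show ?thesis by (rule permutes_p')
  qed
  have pA_in: "p x \<in> A" if "p permutes A" "x \<in> A" for p x
    using permutes_in_image[OF that(1)] that(2) by simp
  have qB_in: "q y \<in> B" if "q permutes B" "y \<in> B" for q y
    using permutes_in_image[OF that(1)] that(2) by simp
  have bijtr: "bij_betw tr {p. p permutes A} {q. q permutes B}"
  proof (rule bij_betw_byWitness[where f' = tr'])
    show "\<forall>p\<in>{p. p permutes A}. tr' (tr p) = p"
    proof
      fix p assume "p \<in> {p. p permutes A}"
      then have pA: "p permutes A" by simp
      show "tr' (tr p) = p"
      proof
        fix x show "tr' (tr p) x = p x"
          using pA_in[OF pA] permutes_not_in[OF pA] f'f fA by (auto simp: tr_def tr'_def)
      qed
    qed
    show "\<forall>q\<in>{q. q permutes B}. tr (tr' q) = q"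
    proof
      fix q assume "q \<in> {q. q permutes B}"
      then have qB: "q permutes B" by simp
      show "tr (tr' q) = q"
      proof
        fix x show "tr (tr' q) x = q x"
          using qB_in[OF qB] permutes_not_in[OF qB] ff' f'B by (auto simp: tr_def tr'_def)
      qed
    qed
    show "tr ` {p. p permutes A} \<subseteq> {q. q permutes B}" using trP by auto
    show "tr' ` {q. q permutes B} \<subseteq> {p. p permutes A}" using tr'P by auto
  qed
  have "det_on B G = (\<Sum>q\<in>{q. q permutes B}. of_int (sign q) * (\<Prod>b\<in>B. G b (q b)))"
    unfolding det_on_def by simp
  also have "\<dots> = (\<Sum>p\<in>{p. p permutes A}. of_int (sign (tr p)) * (\<Prod>b\<in>B. G b (tr p b)))"
    by (rule sum.reindex_bij_betw[OF bijtr, symmetric])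
  also have "\<dots> = (\<Sum>p\<in>{p. p permutes A}. of_int (sign p) * (\<Prod>a\<in>A. G (f a) (f (p a))))"
  proof (rule sum.cong[OF refl])
    fix p assume "p \<in> {p. p permutes A}"
    then have pA: "p permutes A" by simp
    have "(\<Prod>b\<in>B. G b (tr p b)) = (\<Prod>a\<in>A. G (f a) (tr p (f a)))"
      by (rule prod.reindex_bij_betw[OF bij, symmetric])
    also have "\<dots> = (\<Prod>a\<in>A. G (f a) (f (p a)))"
      by (intro prod.cong refl) (simp add: tr_def fA f'f)
    finally show "of_int (sign (tr p)) * (\<Prod>b\<in>B. G b (tr p b)) = of_int (sign p) * (\<Prod>a\<in>A. G (f a) (f (p a)))"
      using sgn[OF pA] by simp
  qed
  also have "\<dots> = det_on A (\<lambda>a b. G (f a) (f b))" unfolding det_on_def by simp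
  finally show ?thesis .
qed

lemma det_on_cong:
  assumes "\<And>a b. a \<in> S \<Longrightarrow> b \<in> S \<Longrightarrow> G a b = G' a b"
  shows "det_on S G = det_on S G'"
  unfolding det_on_def
proof (rule sum.cong[OF refl])
  fix p assume "p \<in> {p. p permutes S}"
  then have p: "p permutes S" by simp
  have "(\<Prod>a\<in>S. G a (p a)) = (\<Prod>a\<in>S. G' a (p a))"
    by (rule prod.cong[OF refl]) (use assms permutes_in_image[OF p] in auto)
  then show "of_int (sign p) * (\<Prod>a\<in>S. G a (p a)) = of_int (sign p) * (\<Prod>a\<in>S. G' a (p a))"
    by simp
qed

lemma box_measure_wo:
  fixes g :: "'n::{finite,wellorder} \<Rightarrow> 'a \<Rightarrow> real" and c :: "'a \<Rightarrow> real"
  assumes finA: "finite A"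
    and surj: "\<forall>w. \<exists>v::(real,'n) vec. \<forall>a\<in>A. (\<Sum>i\<in>UNIV. v$i * g i a) = w a"
    and det1: "det_on A (\<lambda>a b. \<Sum>i\<in>UNIV. g i a * g i b) \<ge> 1"
    and dl: "\<delta> \<ge> 0"
  shows "measure lebesgue {t::(real,'n) vec. (\<forall>i. \<bar>t$i\<bar> \<le> 1) \<and> (\<forall>a\<in>A. \<bar>c a + (\<Sum>i\<in>UNIV. t$i * g i a)\<bar> \<le> \<delta>)}
           \<le> (2*\<delta>)^card A * (2*real CARD('n))^CARD('n)"
proof -
  define E where "E = {t::(real,'n) vec. (\<forall>i. \<bar>t$i\<bar> \<le> 1) \<and> (\<forall>a\<in>A. \<bar>c a + (\<Sum>i\<in>UNIV. t$i * g i a)\<bar> \<le> \<delta>)}"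
  define r where "r = (\<lambda>a. (\<chi> i. g i a) :: (real,'n) vec)"
  have rt: "r a \<bullet> t = (\<Sum>i\<in>UNIV. t$i * g i a)" for a t
    by (simp add: r_def inner_vec_def mult.commute)
  have surj': "\<forall>w. \<exists>v. \<forall>a\<in>A. r a \<bullet> v = w a" using surj by (simp add: rt)
  have injr: "inj_on r A"
  proof (rule inj_onI)
    fix a b assume ab: "a \<in> A" "b \<in> A" "r a = r b"
    show "a = b"
    proof (rule ccontr)
      assume ne: "a \<noteq> b"
      obtain v where v: "\<forall>x\<in>A. r x \<bullet> v = (if x = a then (1::real) else 0)"
        using spec[OF surj', of "\<lambda>x. if x = a then 1 else 0"] by blast
      have 1: "r a \<bullet> v = 1" using v ab(1) by simp
      have 2: "r b \<bullet> v = 0" using v ab(2) ne by auto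
      show False using 1 2 ab(3) by simp
    qed
  qed
  have indep: "independent (r ` A)"
  proof
    assume "dependent (r ` A)"
    then obtain u where u: "\<exists>x\<in>r ` A. u x \<noteq> 0" "(\<Sum>x\<in>r ` A. u x *\<^sub>R x) = 0"
      using dependent_finite[of "r ` A"] finA by auto
    obtain v where v: "\<forall>a\<in>A. r a \<bullet> v = u (r a)"
      using spec[OF surj', of "\<lambda>a. u (r a)"] by blast
    have "0 = (\<Sum>x\<in>r ` A. u x *\<^sub>R x) \<bullet> v" using u(2) by simp
    also have "\<dots> = (\<Sum>x\<in>r ` A. u x * (x \<bullet> v))" by (simp add: inner_sum_left)
    also have "\<dots> = (\<Sum>a\<in>A. u (r a) * (r a \<bullet> v))" by (simp add: sum.reindex[OF injr])
    also have "\<dots> = (\<Sum>a\<in>A. (u (r a))^2)" using v by (simp add: power2_eq_square)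
    finally have s0: "(\<Sum>a\<in>A. (u (r a))^2) = 0" by simp
    obtain a0 where a0: "a0 \<in> A" "u (r a0) \<noteq> 0" using u(1) by auto
    then have "(u (r a0))^2 \<le> (\<Sum>a\<in>A. (u (r a))^2)" using finA by (intro member_le_sum) auto
    moreover have "(u (r a0))^2 > 0" using a0(2) by simp
    ultimately show False using s0 by simp
  qed
  define W where "W = span (r ` A)"
  define K where "K = {y::(real,'n) vec. \<forall>x\<in>W. orthogonal x y}"
  have subK: "subspace K" unfolding K_def by (rule subspace_orthogonal_to_vectors)
  have dimW: "dim W = card A"
    unfolding W_def using dim_eq_card_independent[OF indep] card_image[OF injr] by simp
  have "dim {y \<in> UNIV. \<forall>x\<in>W. orthogonal x y} + dim W = dim (UNIV::((real,'n) vec) set)"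
    by (rule dim_subspace_orthogonal_to_vectors) (auto simp: W_def)
  then have dimK: "dim K + card A = CARD('n)" using dimW by (simp add: K_def)
  obtain Bk where Bk: "Bk \<subseteq> K" "pairwise orthogonal Bk" "\<And>x. x \<in> Bk \<Longrightarrow> norm x = 1"
      "independent Bk" "card Bk = dim K" "span Bk = K"
    using orthonormal_basis_subspace[OF subK] by blast
  have finBk: "finite Bk" using Bk(4) by (rule finiteI_independent)
  define J where "J = Inl ` A \<union> Inr ` Bk"
  have cardJ: "card J = CARD('n)"
  proof -
    have "card J = card (Inl ` A :: ('a + (real,'n) vec) set) + card (Inr ` Bk :: ('a + (real,'n) vec) set)"
      unfolding J_def using finA finBk by (intro card_Un_disjoint) auto
    also have "\<dots> = card A + card Bk" by (simp add: card_image)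
    finally show ?thesis using dimK Bk(5) by simp
  qed
  have finJ: "finite J" unfolding J_def using finA finBk by simp
  obtain \<sigma> where \<sigma>: "bij_betw \<sigma> (UNIV::'n set) J"
    using finite_same_card_bij[of "UNIV::'n set" J] finJ cardJ by auto
  have \<sigma>J: "\<sigma> i \<in> J" for i using \<sigma> bij_betwE by blast
  have \<sigma>inj: "\<sigma> i = \<sigma> k \<Longrightarrow> i = k" for i k using \<sigma> unfolding bij_betw_def inj_on_def by blast
  define \<rho> where "\<rho> = (\<lambda>i. case \<sigma> i of Inl a \<Rightarrow> r a | Inr q \<Rightarrow> q)"
  define S where "S = {i. \<sigma> i \<in> Inl ` A}"
  define \<tau> where "\<tau> = (\<lambda>i. projl (\<sigma> i))"
  have inS: "i \<in> S \<Longrightarrow> \<sigma> i = Inl (\<tau> i) \<and> \<tau> i \<in> A \<and> \<rho> i = r (\<tau> i)" for i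
    unfolding S_def \<tau>_def \<rho>_def by auto
  have notS: "i \<notin> S \<Longrightarrow> \<exists>q\<in>Bk. \<sigma> i = Inr q \<and> \<rho> i = q" for i
    using \<sigma>J[of i] unfolding S_def \<rho>_def J_def by auto
  have orth_rq: "r a \<bullet> q = 0" if "a \<in> A" "q \<in> Bk" for a q
  proof -
    have "r a \<in> W" unfolding W_def using that(1) by (simp add: span_base)
    moreover have "q \<in> K" using that(2) Bk(1) by blast
    ultimately show ?thesis unfolding K_def orthogonal_def by blast
  qed
  have qq: "q \<bullet> q' = (if q = q' then 1 else 0)" if "q \<in> Bk" "q' \<in> Bk" for q q'
  proof (cases "q = q'")
    case True
    then show ?thesis using Bk(3)[OF that(1)] by (simp add: power2_norm_eq_inner[symmetric])
  next
    case False
    then show ?thesis using Bk(2) that unfolding pairwise_def orthogonal_def by auto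
  qed
  define Mx where "Mx = ((\<chi> i. \<rho> i) :: ((real,'n) vec,'n) vec)"
  define M where "M = Mx ** transpose Mx"
  have Mij: "M$i$k = \<rho> i \<bullet> \<rho> k" for i k
    by (simp add: M_def Mx_def matrix_matrix_mult_def transpose_def inner_vec_def)
  have detM: "det M = det_on S (\<lambda>i k. M$i$k)"
  proof (rule det_block)
    fix i k assume "i \<in> S" "k \<notin> S"
    then show "M$i$k = 0" using inS[of i] notS[of k] orth_rq by (auto simp: Mij)
  next
    fix i k assume "i \<notin> S" "k \<in> S"
    then show "M$i$k = 0" using inS[of k] notS[of i] orth_rq by (auto simp: Mij inner_commute)
  next
    fix i k assume ik: "i \<notin> S" "k \<notin> S"
    obtain q where q: "q \<in> Bk" "\<sigma> i = Inr q" "\<rho> i = q" using notS[OF ik(1)] by blast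
    obtain q' where q': "q' \<in> Bk" "\<sigma> k = Inr q'" "\<rho> k = q'" using notS[OF ik(2)] by blast
    have "q = q' \<longleftrightarrow> i = k" using q q' \<sigma>inj by auto
    then show "M$i$k = (if i = k then 1 else 0)" using qq[OF q(1) q'(1)] q q' by (simp add: Mij)
  qed
  have bij\<tau>: "bij_betw \<tau> S A"
  proof (rule bij_betw_imageI)
    show "inj_on \<tau> S"
    proof (rule inj_onI)
      fix i k assume "i \<in> S" "k \<in> S" "\<tau> i = \<tau> k"
      then have "\<sigma> i = \<sigma> k" using inS by metis
      then show "i = k" by (rule \<sigma>inj)
    qed
    show "\<tau> ` S = A"
    proof
      show "\<tau> ` S \<subseteq> A" using inS by auto
      show "A \<subseteq> \<tau> ` S"
      proof
        fix a assume a: "a \<in> A"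
        then have "Inl a \<in> J" unfolding J_def by simp
        then obtain i where i: "\<sigma> i = Inl a" using \<sigma> unfolding bij_betw_def by (metis imageE)
        then have "i \<in> S" unfolding S_def using a by simp
        moreover have "\<tau> i = a" unfolding \<tau>_def using i by simp
        ultimately show "a \<in> \<tau> ` S" by blast
      qed
    qed
  qed
  have finS: "finite S" by simp
  have "det_on A (\<lambda>a b. \<Sum>i\<in>UNIV. g i a * g i b) = det_on A (\<lambda>a b. r a \<bullet> r b)"
    by (rule det_on_cong) (simp add: r_def inner_vec_def)
  also have "\<dots> = det_on S (\<lambda>i k. r (\<tau> i) \<bullet> r (\<tau> k))"
    by (rule det_on_reindex[OF bij\<tau> finS])
  also have "\<dots> = det_on S (\<lambda>i k. M$i$k)"
    by (rule det_on_cong) (simp add: Mij inS)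
  also have "\<dots> = det Mx ^ 2"
    using detM by (simp add: M_def det_mul det_transpose power2_eq_square)
  finally have dsq: "det Mx ^ 2 \<ge> 1" using det1 by simp
  have dge: "\<bar>det Mx\<bar> \<ge> 1"
  proof (rule ccontr)
    assume "\<not> \<bar>det Mx\<bar> \<ge> 1"
    then have "\<bar>det Mx\<bar> < 1" by simp
    then have "\<bar>det Mx\<bar>^2 < 1" by (simp add: power_less_one_iff abs_square_less_1)
    then show False using dsq by simp
  qed
  define T where "T = (\<lambda>t. Mx *v t)"
  have Tt: "T t $ i = \<rho> i \<bullet> t" for t i
    by (simp add: T_def Mx_def matrix_vector_mult_def inner_vec_def)
  have linT: "linear T" unfolding T_def by simp
  have matT: "matrix T = Mx" unfolding T_def by simp
  have Ecl: "closed E"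
  proof -
    have "E = (\<Inter>i. {t::(real,'n) vec. \<bar>t$i\<bar> \<le> 1}) \<inter> (\<Inter>a\<in>A. {t. \<bar>c a + r a \<bullet> t\<bar> \<le> \<delta>})"
      unfolding E_def by (auto simp: rt)
    moreover have "closed {t::(real,'n) vec. \<bar>t$i\<bar> \<le> 1}" for i
      by (intro closed_Collect_le continuous_intros)
    moreover have "closed {t::(real,'n) vec. \<bar>c a + r a \<bullet> t\<bar> \<le> \<delta>}" for a
      by (intro closed_Collect_le continuous_intros)
    ultimately show ?thesis by (auto intro!: closed_INT closed_Int)
  qed
  have Ebd: "bounded E"
  proof -
    have "E \<subseteq> cbox (-1) 1" unfolding E_def by (auto simp: mem_box_cart abs_le_iff)
    then show ?thesis using bounded_cbox bounded_subset by blast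
  qed
  have Elm: "E \<in> lmeasurable" using Ecl Ebd by (intro lmeasurable_compact) (simp add: compact_eq_bounded_closed)
  define C where "C = real CARD('n)"
  define lo where "lo = ((\<chi> i. case \<sigma> i of Inl a \<Rightarrow> - c a - \<delta> | Inr q \<Rightarrow> - C) :: (real,'n) vec)"
  define hi where "hi = ((\<chi> i. case \<sigma> i of Inl a \<Rightarrow> - c a + \<delta> | Inr q \<Rightarrow> C) :: (real,'n) vec)"
  have TE: "T ` E \<subseteq> cbox lo hi"
  proof
    fix u assume "u \<in> T ` E"
    then obtain t where t: "t \<in> E" "u = T t" by blast
    have "lo $ i \<le> u $ i \<and> u $ i \<le> hi $ i" for i
    proof (cases "i \<in> S")
      case True
      note iS = inS[OF True]
      have "\<bar>c (\<tau> i) + r (\<tau> i) \<bullet> t\<bar> \<le> \<delta>" using t(1) iS unfolding E_def by (auto simp: rt)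
      then show ?thesis using iS unfolding t(2) lo_def hi_def by (simp add: Tt abs_le_iff)
    next
      case False
      obtain q where q: "q \<in> Bk" "\<sigma> i = Inr q" "\<rho> i = q" using notS[OF False] by blast
      have "\<bar>q \<bullet> t\<bar> \<le> C"
      proof -
        have "\<bar>q \<bullet> t\<bar> = \<bar>\<Sum>j\<in>UNIV. q$j * t$j\<bar>" by (simp add: inner_vec_def)
        also have "\<dots> \<le> (\<Sum>j\<in>UNIV. \<bar>q$j * t$j\<bar>)" by (rule sum_abs)
        also have "\<dots> \<le> (\<Sum>j\<in>(UNIV::'n set). (1::real))"
        proof (rule sum_mono)
          fix j
          have "\<bar>q$j\<bar> \<le> 1" using component_le_norm_cart[of q j] Bk(3)[OF q(1)] by simp
          moreover have "\<bar>t$j\<bar> \<le> 1" using t(1) unfolding E_def by auto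
          ultimately show "\<bar>q$j * t$j\<bar> \<le> 1" by (simp add: abs_mult mult_le_one)
        qed
        finally show ?thesis unfolding C_def by simp
      qed
      then show ?thesis using q unfolding t(2) lo_def hi_def by (simp add: Tt abs_le_iff)
    qed
    then show "u \<in> cbox lo hi" by (simp add: mem_box_cart)
  qed
  have "\<bar>det Mx\<bar> * measure lebesgue E = measure lebesgue (T ` E)"
    using measure_linear_image[OF linT Elm] matT by simp
  also have "\<dots> \<le> measure lebesgue (cbox lo hi)"
    using measurable_linear_image[OF linT Elm] TE
    by (intro measure_mono_fmeasurable) (auto simp: lmeasurable_cbox)
  also have "\<dots> = measure lborel (cbox lo hi)" by simp
  also have "\<dots> = (\<Prod>i\<in>UNIV. hi$i - lo$i)"
  proof (rule content_cbox_cart)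
    have "lo $ i \<le> hi $ i" for i
      using dl unfolding lo_def hi_def C_def by (auto split: sum.split)
    then have "lo \<in> cbox lo hi" by (simp add: mem_box_cart)
    then show "cbox lo hi \<noteq> {}" by blast
  qed
  also have "\<dots> = (\<Prod>i\<in>UNIV. if i \<in> S then 2 * \<delta> else 2 * C)"
  proof (rule prod.cong[OF refl])
    fix i show "hi$i - lo$i = (if i \<in> S then 2 * \<delta> else 2 * C)"
      using inS[of i] notS[of i] unfolding lo_def hi_def by auto
  qed
  also have "\<dots> = (2 * \<delta>) ^ card S * (2 * C) ^ card (- S)"
    by (simp add: prod.If_cases Int_def Collect_neg_eq)
  also have "\<dots> \<le> (2 * \<delta>) ^ card A * (2 * C) ^ CARD('n)"
  proof -
    have "card S = card A" using bij\<tau> bij_betw_same_card by blast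
    moreover have "(2 * C) ^ card (- S) \<le> (2 * C) ^ CARD('n)"
    proof (rule power_increasing)
      show "card (- S) \<le> CARD('n)" by (rule card_mono) auto
      have "CARD('n) \<ge> 1" by (simp add: Suc_leI)
      then have "real CARD('n) \<ge> 1" by simp
      then show "1 \<le> 2 * C" unfolding C_def by linarith
    qed
    ultimately show ?thesis using dl by (simp add: mult_left_mono)
  qed
  finally have "\<bar>det Mx\<bar> * measure lebesgue E \<le> (2 * \<delta>) ^ card A * (2 * C) ^ CARD('n)" .
  moreover have "measure lebesgue E \<le> \<bar>det Mx\<bar> * measure lebesgue E"
    using dge measure_nonneg[of lebesgue E] by (simp add: mult_le_cancel_right1)
  ultimately show ?thesis unfolding E_def C_def by linarith
qed

typedef 'a wo = "UNIV :: 'a set" by simp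

lemma bij_Rep_wo: "bij_betw Rep_wo UNIV UNIV"
  by (rule bij_betw_byWitness[where f' = Abs_wo]) (auto simp: Rep_wo_inverse Abs_wo_inverse)

lemma sum_Rep_wo: "(\<Sum>j\<in>UNIV. f (Rep_wo j)) = (\<Sum>i\<in>UNIV. f i)"
  by (rule sum.reindex_bij_betw[OF bij_Rep_wo])

lemma prod_Rep_wo: "(\<Prod>j\<in>UNIV. f (Rep_wo j)) = (\<Prod>i\<in>UNIV. f i)"
  by (rule prod.reindex_bij_betw[OF bij_Rep_wo])

instantiation wo :: (finite) finite
begin
instance
proof
  have "(UNIV :: 'a wo set) = Abs_wo ` UNIV"
    by (metis Rep_wo_inverse UNIV_I image_eqI subsetI subset_antisym)
  then show "finite (UNIV :: 'a wo set)" by (metis finite finite_imageI)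
qed
end

instantiation wo :: (finite) linorder
begin
definition less_eq_wo :: "'a wo \<Rightarrow> 'a wo \<Rightarrow> bool" where
  "less_eq_wo x y \<longleftrightarrow> to_nat (Rep_wo x) \<le> to_nat (Rep_wo y)"
definition less_wo :: "'a wo \<Rightarrow> 'a wo \<Rightarrow> bool" where
  "less_wo x y \<longleftrightarrow> to_nat (Rep_wo x) < to_nat (Rep_wo y)"
instance
proof
  fix x y z :: "'a wo"
  show "(x < y) = (x \<le> y \<and> \<not> y \<le> x)" unfolding less_eq_wo_def less_wo_def by auto
  show "x \<le> x" unfolding less_eq_wo_def by simp
  show "x \<le> y \<Longrightarrow> y \<le> z \<Longrightarrow> x \<le> z" unfolding less_eq_wo_def by simp
  show "x \<le> y \<Longrightarrow> y \<le> x \<Longrightarrow> x = y"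
  proof -
    assume "x \<le> y" "y \<le> x"
    then have "to_nat (Rep_wo x) = to_nat (Rep_wo y)" unfolding less_eq_wo_def by simp
    then have "Rep_wo x = Rep_wo y" by simp
    then show "x = y" by (simp add: Rep_wo_inject)
  qed
  show "x \<le> y \<or> y \<le> x" unfolding less_eq_wo_def by auto
qed
end

instantiation wo :: (finite) wellorder
begin
instance
proof
  fix P :: "'a wo \<Rightarrow> bool" and a :: "'a wo"
  assume step: "\<And>x. (\<And>y. y < x \<Longrightarrow> P y) \<Longrightarrow> P x"
  have "\<forall>a. to_nat (Rep_wo a) = n \<longrightarrow> P a" for n
  proof (induction n rule: less_induct)
    case (less n)
    show ?case
    proof (intro allI impI)
      fix a :: "'a wo" assume an: "to_nat (Rep_wo a) = n"
      show "P a"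
      proof (rule step)
        fix y assume "y < a"
        then have "to_nat (Rep_wo y) < n" using an unfolding less_wo_def by simp
        then show "P y" using less by blast
      qed
    qed
  qed
  then show "P a" by blast
qed
end

lemma card_wo: "CARD('a::finite wo) = CARD('a)"
  using bij_betw_same_card[OF bij_Rep_wo] by simp

lemma prod_Basis_cart: "(\<Prod>b\<in>(Basis :: (real^'n) set). f b) = (\<Prod>i\<in>UNIV. f (axis i 1))"
proof -
  have B: "(Basis :: (real^'n) set) = (\<lambda>i. axis i 1) ` UNIV"
    by (auto simp: Basis_vec_def)
  have inj: "inj (\<lambda>i::'n. axis i (1::real))" by (auto simp: inj_on_def axis_eq_axis)
  show ?thesis unfolding B by (simp add: prod.reindex[OF inj])
qed

definition rn :: "(real, 'm wo) vec \<Rightarrow> real^'m::finite" where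
  "rn u = (\<chi> i. u $ Abs_wo i)"

lemma rn_cont: "continuous_on UNIV rn"
  unfolding rn_def by (intro continuous_on_vec_lambda continuous_intros)

lemma rn_meas: "rn \<in> borel_measurable borel"
  by (rule borel_measurable_continuous_onI[OF rn_cont])

lemma rn_meas2: "rn \<in> measurable lborel borel"
proof -
  have "measurable lborel borel = measurable borel (borel :: (real^'m::finite) measure)"
    by (rule measurable_cong_sets) simp_all
  then show ?thesis using rn_meas by simp
qed

lemma distr_rn: "distr lborel borel (rn :: (real, 'm::finite wo) vec \<Rightarrow> real^'m) = lborel"
proof (rule lborel_eqI[symmetric])
  show "sets (distr lborel borel (rn :: (real, 'm::finite wo) vec \<Rightarrow> real^'m)) = sets borel" by simp
  fix l u :: "real^'m"
  assume lu: "\<And>b. b \<in> Basis \<Longrightarrow> l \<bullet> b \<le> u \<bullet> b"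
  have lu': "l $ i \<le> u $ i" for i using lu[of "axis i 1"] by (simp add: cart_eq_inner_axis Basis_vec_def) (metis)
  define l' where "l' = ((\<chi> j. l $ Rep_wo j) :: (real, 'm wo) vec)"
  define u' where "u' = ((\<chi> j. u $ Rep_wo j) :: (real, 'm wo) vec)"
  have pre: "rn -` box l u = box l' u'"
  proof (rule set_eqI)
    fix v :: "(real, 'm wo) vec"
    have "v \<in> rn -` box l u \<longleftrightarrow> (\<forall>i. l $ i < v $ Abs_wo i \<and> v $ Abs_wo i < u $ i)"
      by (simp add: rn_def mem_box_cart)
    also have "\<dots> \<longleftrightarrow> (\<forall>j. l $ Rep_wo j < v $ j \<and> v $ j < u $ Rep_wo j)"
      by (metis Abs_wo_inverse Rep_wo_inverse UNIV_I)
    also have "\<dots> \<longleftrightarrow> v \<in> box l' u'" by (simp add: l'_def u'_def mem_box_cart)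
    finally show "v \<in> rn -` box l u \<longleftrightarrow> v \<in> box l' u'" .
  qed
  have "emeasure (distr lborel borel (rn :: (real, 'm::finite wo) vec \<Rightarrow> real^'m)) (box l u)
      = emeasure lborel (rn -` box l u \<inter> space lborel)"
    by (rule emeasure_distr[OF rn_meas2]) simp
  also have "\<dots> = emeasure lborel (box l' u')" using pre by simp
  also have "\<dots> = (\<Prod>b\<in>Basis. (u' - l') \<bullet> b)"
    by (rule emeasure_lborel_box) (simp add: Basis_vec_def l'_def u'_def lu' cart_eq_inner_axis[symmetric] | auto simp: lu' cart_eq_inner_axis[symmetric] l'_def u'_def)+
  also have "\<dots> = (\<Prod>j\<in>UNIV. u $ Rep_wo j - l $ Rep_wo j)"
    by (simp add: prod_Basis_cart cart_eq_inner_axis[symmetric] l'_def u'_def)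
  also have "\<dots> = (\<Prod>i\<in>UNIV. u $ i - l $ i)" using prod_Rep_wo[of "\<lambda>i. u $ i - l $ i"] by simp
  also have "\<dots> = (\<Prod>b\<in>Basis. (u - l) \<bullet> b)"
    by (simp add: prod_Basis_cart cart_eq_inner_axis[symmetric])
  finally show "emeasure (distr lborel borel (rn :: (real, 'm::finite wo) vec \<Rightarrow> real^'m)) (box l u) = (\<Prod>b\<in>Basis. (u - l) \<bullet> b)"
    by simp
qed

lemma measure_rn:
  fixes S :: "(real^'m::finite) set"
  assumes "S \<in> sets borel"
  shows "measure lborel S = measure lborel (rn -` S :: (real, 'm wo) vec set)"
proof -
  have "measure lborel S = measure (distr lborel borel (rn :: (real, 'm::finite wo) vec \<Rightarrow> real^'m)) S"
    by (simp add: distr_rn)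
  also have "\<dots> = measure lborel (rn -` S \<inter> space lborel :: (real, 'm wo) vec set)"
    by (rule measure_distr[OF rn_meas2]) (use assms in simp)
  finally show ?thesis by simp
qed

lemma box_set_closed:
  fixes g :: "'n::finite \<Rightarrow> 'a \<Rightarrow> real"
  shows "closed {t::(real,'n) vec. (\<forall>i. \<bar>t$i\<bar> \<le> 1) \<and> (\<forall>a\<in>A. \<bar>c a + (\<Sum>i\<in>UNIV. t$i * g i a)\<bar> \<le> \<delta>)}"
proof -
  have "{t::(real,'n) vec. (\<forall>i. \<bar>t$i\<bar> \<le> 1) \<and> (\<forall>a\<in>A. \<bar>c a + (\<Sum>i\<in>UNIV. t$i * g i a)\<bar> \<le> \<delta>)}
     = (\<Inter>i. {t::(real,'n) vec. \<bar>t$i\<bar> \<le> 1}) \<inter> (\<Inter>a\<in>A. {t. \<bar>c a + (\<Sum>i\<in>UNIV. t$i * g i a)\<bar> \<le> \<delta>})"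
    by auto
  moreover have "closed {t::(real,'n) vec. \<bar>t$i\<bar> \<le> 1}" for i
    by (intro closed_Collect_le continuous_intros)
  moreover have "closed {t::(real,'n) vec. \<bar>c a + (\<Sum>i\<in>UNIV. t$i * g i a)\<bar> \<le> \<delta>}" for a
    by (intro closed_Collect_le continuous_intros)
  ultimately show ?thesis by (auto intro!: closed_INT closed_Int)
qed

lemma box_measure:
  fixes g :: "'m::finite \<Rightarrow> 'a \<Rightarrow> real" and c :: "'a \<Rightarrow> real"
  assumes finA: "finite A"
    and surj: "\<forall>w. \<exists>v::real^'m. \<forall>a\<in>A. (\<Sum>i\<in>UNIV. v$i * g i a) = w a"
    and det1: "det_on A (\<lambda>a b. \<Sum>i\<in>UNIV. g i a * g i b) \<ge> 1"
    and dl: "\<delta> \<ge> 0"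
  shows "measure lborel {t::real^'m. (\<forall>i. \<bar>t$i\<bar> \<le> 1) \<and> (\<forall>a\<in>A. \<bar>c a + (\<Sum>i\<in>UNIV. t$i * g i a)\<bar> \<le> \<delta>)}
           \<le> (2*\<delta>)^card A * (2*real CARD('m))^CARD('m)"
proof -
  define E where "E = {t::real^'m. (\<forall>i. \<bar>t$i\<bar> \<le> 1) \<and> (\<forall>a\<in>A. \<bar>c a + (\<Sum>i\<in>UNIV. t$i * g i a)\<bar> \<le> \<delta>)}"
  define g' where "g' = (\<lambda>j a. g (Rep_wo j) a)"
  define E' where "E' = {t::(real, 'm wo) vec. (\<forall>i. \<bar>t$i\<bar> \<le> 1) \<and> (\<forall>a\<in>A. \<bar>c a + (\<Sum>i\<in>UNIV. t$i * g' i a)\<bar> \<le> \<delta>)}"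
  have Eb: "E \<in> sets borel" unfolding E_def by (intro borel_closed box_set_closed)
  have E'b: "E' \<in> sets borel" unfolding E'_def by (intro borel_closed box_set_closed)
  have sumrn: "(\<Sum>i\<in>UNIV. rn u $ i * g i a) = (\<Sum>j\<in>UNIV. u $ j * g' j a)" for u a
  proof -
    have "(\<Sum>j\<in>UNIV. u $ j * g' j a) = (\<Sum>j\<in>UNIV. (\<lambda>i. u $ Abs_wo i * g i a) (Rep_wo j))"
      by (simp add: g'_def Rep_wo_inverse)
    also have "\<dots> = (\<Sum>i\<in>UNIV. u $ Abs_wo i * g i a)" by (rule sum_Rep_wo)
    finally show ?thesis by (simp add: rn_def)
  qed
  have pre: "rn -` E = E'"
  proof (rule set_eqI)
    fix u :: "(real, 'm wo) vec"
    have "(\<forall>i. \<bar>u $ Abs_wo i\<bar> \<le> 1) \<longleftrightarrow> (\<forall>j. \<bar>u $ j\<bar> \<le> 1)"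
      by (metis Abs_wo_cases UNIV_I)
    then show "u \<in> rn -` E \<longleftrightarrow> u \<in> E'"
      unfolding E_def E'_def by (simp add: sumrn) (simp add: rn_def)
  qed
  have surj': "\<forall>w. \<exists>v::(real, 'm wo) vec. \<forall>a\<in>A. (\<Sum>i\<in>UNIV. v$i * g' i a) = w a"
  proof
    fix w
    obtain v :: "real^'m" where v: "\<forall>a\<in>A. (\<Sum>i\<in>UNIV. v$i * g i a) = w a" using surj by blast
    define v' where "v' = ((\<chi> j. v $ Rep_wo j) :: (real, 'm wo) vec)"
    have "(\<Sum>i\<in>UNIV. v'$i * g' i a) = (\<Sum>i\<in>UNIV. v$i * g i a)" for a
      unfolding v'_def g'_def using sum_Rep_wo[of "\<lambda>i. v$i * g i a"] by simp
    then show "\<exists>v::(real, 'm wo) vec. \<forall>a\<in>A. (\<Sum>i\<in>UNIV. v$i * g' i a) = w a" using v by metis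
  qed
  have det1': "det_on A (\<lambda>a b. \<Sum>i\<in>UNIV. g' i a * g' i b) \<ge> 1"
  proof -
    have "(\<lambda>a b. \<Sum>i\<in>UNIV. g' i a * g' i b) = (\<lambda>a b. \<Sum>i\<in>UNIV. g i a * g i b)"
    proof (intro ext)
      fix a b show "(\<Sum>i\<in>UNIV. g' i a * g' i b) = (\<Sum>i\<in>UNIV. g i a * g i b)"
        unfolding g'_def using sum_Rep_wo[of "\<lambda>i. g i a * g i b"] by simp
    qed
    then show ?thesis using det1 by simp
  qed
  have "measure lborel E = measure lborel E'" using measure_rn[OF Eb] pre by simp
  also have "\<dots> = measure lebesgue E'" using E'b by simp
  also have "\<dots> \<le> (2*\<delta>)^card A * (2*real CARD('m wo))^CARD('m wo)"
    unfolding E'_def by (rule box_measure_wo[OF finA surj' det1' dl])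
  finally show ?thesis unfolding E_def card_wo .
qed

lemma Ck_deriv: assumes "Ck k f" "k \<ge> 1" shows "(f has_real_derivative deriv f y) (at y)"
proof -
  have "0 < k" using assms(2) by simp
  then have "((deriv ^^ 0) f has_real_derivative (deriv ^^ Suc 0) f y) (at y)"
    using assms(1) unfolding Ck_def by blast
  then show ?thesis by simp
qed

lemma deriv_perturb:
  fixes \<phi> :: "'m::finite \<Rightarrow> real \<Rightarrow> real"
  assumes "\<And>y. (\<tau> has_real_derivative deriv \<tau> y) (at y)"
    and "\<And>i y. (\<phi> i has_real_derivative deriv (\<phi> i) y) (at y)"
  shows "deriv (perturb \<tau> \<phi> t) y = deriv \<tau> y + (\<Sum>i\<in>UNIV. t$i * deriv (\<phi> i) y)"
proof -
  have "((\<lambda>y. \<Sum>i\<in>UNIV. t$i * \<phi> i y) has_real_derivative (\<Sum>i\<in>UNIV. t$i * deriv (\<phi> i) y)) (at y)"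
    by (rule DERIV_sum) (rule DERIV_cmult, rule assms(2))
  then have "(perturb \<tau> \<phi> t has_real_derivative deriv \<tau> y + (\<Sum>i\<in>UNIV. t$i * deriv (\<phi> i) y)) (at y)"
    unfolding perturb_def by (intro DERIV_add assms(1))
  then show ?thesis by (rule DERIV_imp_deriv)
qed

lemma Sn_perturb:
  fixes \<phi> :: "'m::finite \<Rightarrow> real \<Rightarrow> real"
  assumes "\<And>y. (\<tau> has_real_derivative deriv \<tau> y) (at y)"
    and "\<And>i y. (\<phi> i has_real_derivative deriv (\<phi> i) y) (at y)"
  shows "Sn El x \<alpha> (perturb \<tau> \<phi> t) = Sn El x \<alpha> \<tau> + (\<Sum>i\<in>UNIV. t$i * Sn El x \<alpha> (\<phi> i))"
proof -
  define P where "P = (\<lambda>k. pt El x (trunc k \<alpha>))"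
  define D where "D = (\<lambda>k. deriv (El ^^ k) (P k))"
  have "Sn El x \<alpha> (perturb \<tau> \<phi> t) = (\<Sum>k=1..length \<alpha>. (deriv \<tau> (P k) + (\<Sum>i\<in>UNIV. t$i * deriv (\<phi> i) (P k))) / D k)"
    unfolding Sn_def P_def D_def by (simp add: deriv_perturb[OF assms])
  also have "\<dots> = (\<Sum>k=1..length \<alpha>. deriv \<tau> (P k) / D k) + (\<Sum>k=1..length \<alpha>. \<Sum>i\<in>UNIV. t$i * (deriv (\<phi> i) (P k) / D k))"
    by (simp add: add_divide_distrib sum.distrib sum_divide_distrib)
  also have "(\<Sum>k=1..length \<alpha>. \<Sum>i\<in>UNIV. t$i * (deriv (\<phi> i) (P k) / D k)) = (\<Sum>i\<in>UNIV. t$i * Sn El x \<alpha> (\<phi> i))"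
    unfolding Sn_def P_def D_def by (subst sum.swap) (simp add: sum_distrib_left)
  finally show ?thesis unfolding Sn_def P_def D_def by simp
qed

lemma Sn_zero: "Sn El x \<alpha> (\<lambda>_. 0) = 0"
proof -
  have "deriv (\<lambda>_. 0::real) y = 0" for y by (rule DERIV_imp_deriv) (rule DERIV_const)
  then show ?thesis unfolding Sn_def by simp
qed

lemma jac_imp:
  fixes \<phi> :: "'m::finite \<Rightarrow> real \<Rightarrow> real"
  assumes d: "\<And>i y. (\<phi> i has_real_derivative deriv (\<phi> i) y) (at y)"
    and J: "jac_aff A (Gmap El x A (\<lambda>_. 0) \<phi>) \<ge> 1"
  shows "\<forall>w. \<exists>v::real^'m. \<forall>a\<in>A. (\<Sum>i\<in>UNIV. v$i * Sn El x a (\<phi> i)) = w a"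
    and "det_on A (\<lambda>a b. \<Sum>i\<in>UNIV. Sn El x a (\<phi> i) * Sn El x b (\<phi> i)) \<ge> 1"
proof -
  have z: "\<And>y. ((\<lambda>_. 0::real) has_real_derivative deriv (\<lambda>_. 0::real) y) (at y)"
  proof -
    fix y
    have "deriv (\<lambda>_. 0::real) y = 0" by (rule DERIV_imp_deriv) (rule DERIV_const)
    then show "((\<lambda>_. 0::real) has_real_derivative deriv (\<lambda>_. 0::real) y) (at y)" by simp
  qed
  define G where "G = Gmap El x A (\<lambda>_. 0) \<phi>"
  have Gv: "G v a = (if a \<in> A then (\<Sum>i\<in>UNIV. v$i * Sn El x a (\<phi> i)) else 0)" for v a
    unfolding G_def Gmap_def using Sn_perturb[OF z d, where El=El and x=x and \<alpha>=a and t=v] by (simp add: Sn_zero)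
  define L where "L = (\<lambda>v a. G v a - G 0 a)"
  have Lv: "a \<in> A \<Longrightarrow> L v a = (\<Sum>i\<in>UNIV. v$i * Sn El x a (\<phi> i))" for v a
    unfolding L_def by (simp add: Gv)
  have Lax: "a \<in> A \<Longrightarrow> L (axis i 1) a = Sn El x a (\<phi> i)" for a i
    by (simp add: Lv axis_def if_distrib[where f="\<lambda>z. z * _"] cong: if_cong)
  have jdef: "jac_aff A G = (if (\<forall>w. \<exists>v. \<forall>a\<in>A. L v a = w a)
      then sqrt (det_on A (\<lambda>a b. \<Sum>i\<in>UNIV. L (axis i 1) a * L (axis i 1) b)) else 0)"
    by (simp only: jac_aff_def L_def Let_def)
  show s: "\<forall>w. \<exists>v::real^'m. \<forall>a\<in>A. (\<Sum>i\<in>UNIV. v$i * Sn El x a (\<phi> i)) = w a"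
  proof (rule ccontr)
    assume "\<not> ?thesis"
    then have nc: "\<not> (\<forall>w. \<exists>v. \<forall>a\<in>A. L v a = w a)" using Lv by auto
    have "jac_aff A G = 0" unfolding jdef using nc by (rule if_not_P)
    then show False using J unfolding G_def by simp
  qed
  then have cc: "\<forall>w. \<exists>v. \<forall>a\<in>A. L v a = w a" using Lv by auto
  have "jac_aff A G = sqrt (det_on A (\<lambda>a b. \<Sum>i\<in>UNIV. L (axis i 1) a * L (axis i 1) b))"
    unfolding jdef using cc by (rule if_P)
  also have "det_on A (\<lambda>a b. \<Sum>i\<in>UNIV. L (axis i 1) a * L (axis i 1) b)
    = det_on A (\<lambda>a b. \<Sum>i\<in>UNIV. Sn El x a (\<phi> i) * Sn El x b (\<phi> i))"
    unfolding det_on_def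
  proof (rule sum.cong[OF refl])
    fix p assume "p \<in> {p. p permutes A}"
    then have p: "p permutes A" by simp
    show "of_int (sign p) * (\<Prod>a\<in>A. \<Sum>i\<in>UNIV. L (axis i 1) a * L (axis i 1) (p a)) =
          of_int (sign p) * (\<Prod>a\<in>A. \<Sum>i\<in>UNIV. Sn El x a (\<phi> i) * Sn El x (p a) (\<phi> i))"
      using permutes_in_image[OF p] by (simp add: Lax)
  qed
  finally show "det_on A (\<lambda>a b. \<Sum>i\<in>UNIV. Sn El x a (\<phi> i) * Sn El x b (\<phi> i)) \<ge> 1"
    using J unfolding G_def by simp
qed

lemma Tset_card:
  assumes c: "\<lceil>2 * Lam\<rceil> \<ge> 1"
  shows "finite (Tset Lam n) \<and> real (card (Tset Lam n)) \<le> real (nat \<lceil>2 * Lam\<rceil>) ^ n"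
proof -
  define K where "K = nat \<lceil>2 * Lam\<rceil> ^ n"
  have cK: "real_of_int \<lceil>2 * Lam\<rceil> ^ n = real K" unfolding K_def using c by simp
  have Kpos: "K > 0" unfolding K_def using c by simp
  have "Tset Lam n \<subseteq> (\<lambda>k. real k / real K) ` {..<K}"
  proof
    fix x assume "x \<in> Tset Lam n"
    then have x: "0 \<le> x" "x < 1" "real K * x \<in> \<int>" unfolding Tset_def cK by auto
    then obtain m where m: "real K * x = of_int m" by (metis Ints_cases)
    have "0 \<le> real K * x" using x by simp
    then have m0: "0 \<le> m" using m by simp
    have "real K * x < real K" using x Kpos by simp
    then have mK: "m < int K" using m by simp
    have "x = real (nat m) / real K" using m m0 Kpos by (simp add: field_simps)
    then show "x \<in> (\<lambda>k. real k / real K) ` {..<K}" using m0 mK by (intro image_eqI[of _ _ "nat m"]) auto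
  qed
  then have "finite (Tset Lam n)" "card (Tset Lam n) \<le> card ((\<lambda>k. real k / real K) ` {..<K})"
    using finite_subset card_mono by (blast, blast)
  moreover have "card ((\<lambda>k. real k / real K) ` {..<K}) \<le> K" using card_image_le[of "{..<K}"] by simp
  ultimately show ?thesis unfolding K_def by (simp add: of_nat_le_iff[symmetric] del: of_nat_le_iff)
qed

lemma Thset_card:
  assumes c: "\<lceil>2 * Lam\<rceil> \<ge> 1"
  shows "finite (Thset Lam n) \<and> real (card (Thset Lam n)) \<le> real (nat \<lceil>2 * Lam\<rceil>) ^ n"
proof -
  define K where "K = nat \<lceil>2 * Lam\<rceil> ^ n"
  have cK: "real_of_int \<lceil>2 * Lam\<rceil> ^ n = real K" unfolding K_def using c by simp
  have Kpos: "K > 0" unfolding K_def using c by simp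
  have "Thset Lam n \<subseteq> (\<lambda>k. 2 * pi * real k / real K) ` {..<K}"
  proof
    fix x assume "x \<in> Thset Lam n"
    then have x: "0 \<le> x" "x < 2 * pi" "real K * x / (2 * pi) \<in> \<int>" unfolding Thset_def cK by auto
    then obtain m where m: "real K * x / (2 * pi) = of_int m" by (metis Ints_cases)
    have "0 \<le> real K * x / (2 * pi)" using x by simp
    then have m0: "0 \<le> m" using m by simp
    have "real K * x < real K * (2 * pi)" using x Kpos by simp
    then have "real K * x / (2 * pi) < real K" by (simp add: divide_less_eq)
    then have mK: "m < int K" using m by simp
    have "x = 2 * pi * real (nat m) / real K" using m m0 Kpos by (simp add: field_simps)
    then show "x \<in> (\<lambda>k. 2 * pi * real k / real K) ` {..<K}" using m0 mK by (intro image_eqI[of _ _ "nat m"]) auto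
  qed
  then have "finite (Thset Lam n)" "card (Thset Lam n) \<le> card ((\<lambda>k. 2 * pi * real k / real K) ` {..<K})"
    using finite_subset card_mono by (blast, blast)
  moreover have "card ((\<lambda>k. 2 * pi * real k / real K) ` {..<K}) \<le> K" using card_image_le[of "{..<K}"] by simp
  ultimately show ?thesis unfolding K_def by (simp add: of_nat_le_iff[symmetric] del: of_nat_le_iff)
qed

lemma cube_finite_measure:
  fixes S :: "(real^'m::finite) set"
  assumes "S \<in> sets lborel" "S \<subseteq> {t. \<forall>i. \<bar>t$i\<bar> \<le> 1}"
  shows "emeasure lborel S < \<infinity>"
proof -
  have "S \<subseteq> cbox (-1) 1" using assms(2) by (auto simp: mem_box_cart abs_le_iff)
  then have "emeasure lborel S \<le> emeasure lborel (cbox (-1::real^'m) 1)"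
    by (intro emeasure_mono) auto
  also have "\<dots> < \<infinity>" by (rule emeasure_lborel_cbox_finite)
  finally show ?thesis .
qed

lemma markov_ind:
  fixes Bx :: "'i \<Rightarrow> (real^'m::finite) set"
  assumes finI: "finite I" and Bm: "\<And>i. i \<in> I \<Longrightarrow> Bx i \<in> sets lborel"
    and Bc: "\<And>i. i \<in> I \<Longrightarrow> Bx i \<subseteq> {t. \<forall>k. \<bar>t$k\<bar> \<le> 1}" and M: "M > 0"
  shows "{t\<in>{t. \<forall>k. \<bar>t$k\<bar> \<le> 1}. M \<le> (\<Sum>i\<in>I. indicator (Bx i) t)} \<in> sets lborel"
    and "measure lborel {t\<in>{t. \<forall>k. \<bar>t$k\<bar> \<le> 1}. M \<le> (\<Sum>i\<in>I. indicator (Bx i) t)}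
           \<le> (\<Sum>i\<in>I. measure lborel (Bx i)) / M"
proof -
  define cube where "cube = {t::real^'m. \<forall>k. \<bar>t$k\<bar> \<le> 1}"
  define F where "F = (\<lambda>t. (\<Sum>i\<in>I. indicator (Bx i) t) :: real)"
  define Y where "Y = {t\<in>cube. M \<le> F t}"
  have cubeb: "cube \<in> sets lborel"
  proof -
    have "cube = cbox (-1) 1" unfolding cube_def by (auto simp: mem_box_cart abs_le_iff)
    then show ?thesis by simp
  qed
  have Fm: "F \<in> borel_measurable lborel"
    unfolding F_def using Bm by (intro borel_measurable_sum borel_measurable_indicator) auto
  have "Y = cube \<inter> (F -` {M..} \<inter> space lborel)" unfolding Y_def by auto
  moreover have "F -` {M..} \<inter> space lborel \<in> sets lborel"
    by (rule measurable_sets[OF Fm]) simp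
  ultimately have Ym: "Y \<in> sets lborel" using cubeb by simp
  then show "{t\<in>{t. \<forall>k. \<bar>t$k\<bar> \<le> 1}. M \<le> (\<Sum>i\<in>I. indicator (Bx i) t)} \<in> sets lborel"
    unfolding Y_def F_def cube_def .
  have Yf: "emeasure lborel Y < \<infinity>" using Ym by (intro cube_finite_measure) (auto simp: Y_def cube_def)
  have Bf: "i \<in> I \<Longrightarrow> emeasure lborel (Bx i) < \<infinity>" for i using Bm Bc by (intro cube_finite_measure)
  have intF: "integrable lborel F" unfolding F_def using Bm Bf by (intro Bochner_Integration.integrable_sum integrable_real_indicator) auto
  have le: "M * indicator Y t \<le> F t" for t
  proof (cases "t \<in> Y")
    case True then show ?thesis unfolding Y_def by simp
  next
    case False
    have "0 \<le> F t" unfolding F_def by (intro sum_nonneg) simp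
    then show ?thesis using False by simp
  qed
  have "M * measure lborel Y = integral\<^sup>L lborel (\<lambda>t. M * indicator Y t)" by simp
  also have "\<dots> \<le> integral\<^sup>L lborel F"
    using Ym Yf intF le by (intro integral_mono) auto
  also have "\<dots> = (\<Sum>i\<in>I. measure lborel (Bx i))"
    unfolding F_def using Bm Bf by (subst Bochner_Integration.integral_sum) auto
  finally have "M * measure lborel Y \<le> (\<Sum>i\<in>I. measure lborel (Bx i))" .
  then show "measure lborel {t\<in>{t. \<forall>k. \<bar>t$k\<bar> \<le> 1}. M \<le> (\<Sum>i\<in>I. indicator (Bx i) t)}
           \<le> (\<Sum>i\<in>I. measure lborel (Bx i)) / M"
    using M unfolding Y_def F_def cube_def by (simp add: pos_le_divide_eq mult.commute)
qed

lemma exp_bound: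
  assumes rho: "rho > 0" and c: "c \<ge> (3::real)" and N: "real N \<ge> 6 / rho * ln c"
  shows "exp (-(2*rho/3) * real n) ^ N \<le> (1 / c^4) ^ n"
proof -
  have "exp (-(2*rho/3) * real n) ^ N = exp (real N * (-(2*rho/3) * real n))"
    by (rule exp_of_nat_mult[symmetric])
  also have "\<dots> \<le> exp (real n * (- 4 * ln c))"
  proof -
    have lnc: "ln c \<ge> 0" using c by simp
    have "(2*rho/3) * real N \<ge> (2*rho/3) * (6 / rho * ln c)" using N rho by (intro mult_left_mono) auto
    also have "(2*rho/3) * (6 / rho * ln c) = 4 * ln c" using rho by (simp add: field_simps)
    finally have "(2*rho/3) * real N \<ge> 4 * ln c" .
    then have "real n * (4 * ln c) \<le> real n * ((2*rho/3) * real N)" by (intro mult_left_mono) auto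
    then show ?thesis by (simp add: algebra_simps)
  qed
  also have "\<dots> = (1 / c^4) ^ n"
  proof -
    have "(1 / c^4) ^ n = exp (ln ((1 / c^4) ^ n))" using c by simp
    also have "ln ((1 / c^4) ^ n) = real n * ln (1 / c^4)" using c by (simp add: ln_realpow)
    also have "ln (1 / c^4) = - 4 * ln c" using c by (simp add: ln_div ln_realpow)
    finally show ?thesis by simp
  qed
  finally show ?thesis .
qed

theorem mainTheorem7:
  fixes r l :: nat and lam Lam R rho :: real and El :: "real \<Rightarrow> real"
    and D :: "(real \<Rightarrow> real) set" and J q N :: nat and a b :: "nat \<Rightarrow> real"
    and \<phi> :: "'m::finite \<Rightarrow> real \<Rightarrow> real"
  assumes r: "r \<ge> 2" and l: "l \<ge> 2"
    and E: "expanding_map r l lam Lam El"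
    and Dopen: "cr_open r D" and Dbdd: "cr_bounded r D"
    and R: "R > 0" and Rbd: "\<forall>\<tau>\<in>D. (SUP y. \<bar>deriv \<tau> y\<bar>) < R"
    and rho: "rho > 0"
    and cover: "{ln lam..ln Lam} \<subseteq> (\<Union>j\<in>{1..J}. {a j<..<b j})"
    and short: "\<forall>j\<in>{1..J}. b j - a j < rho / 3"
    and N: "N = nat \<lceil>6 / rho * ln (real_of_int \<lceil>2 * Lam\<rceil>)\<rceil>"
    and q: "q \<ge> 1" and qbd: "real (q + 1) * real N * exp (- real q * rho / 2) < 1 / (4 * real J)"
    and smooth: "\<forall>i. Cinf_circle (\<phi> i)"
    and prop34: "\<forall>x\<in>{0..<1}. \<forall>B. B \<subseteq> words l q \<and> card B \<ge> N * (q + 1) \<longrightarrow>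
         (\<exists>B'\<subseteq>B. card B' = N \<and>
            (\<forall>n\<ge>q. \<forall>A\<subseteq>words l n. bij_betw (trunc q) A B' \<longrightarrow>
               jac_aff A (Gmap El x A (\<lambda>_. 0) \<phi>) \<ge> 1))"
  shows "\<forall>\<tau>\<in>D. {t :: real^'m. (\<forall>i. \<bar>t $ i\<bar> \<le> 1) \<and>
            infinite {n. perturb \<tau> \<phi> t \<in> Xset El l lam Lam D R rho J a b q N n}}
          \<in> null_sets lebesgue"
proof (intro ballI)
  fix \<tau> assume \<tau>D: "\<tau> \<in> D"
  interpret EM r l lam Lam El using r l E by unfold_locales auto
  have lamgt: "1 < lam" by (rule lam1)
  have LamL: "lam \<le> Lam" using lamLam(1)[of 0] lamLam(2)[of 0] by linarith
  have cge3: "\<lceil>2 * Lam\<rceil> \<ge> 3"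
  proof -
    have "2 < 2 * Lam" using lamgt LamL by linarith
    also have "2 * Lam \<le> of_int \<lceil>2 * Lam\<rceil>" by (rule le_of_int_ceiling)
    finally have "(2::int) < \<lceil>2 * Lam\<rceil>" by linarith
    then show ?thesis by simp
  qed
  define c where "c = nat \<lceil>2 * Lam\<rceil>"
  have cint: "real_of_int \<lceil>2 * Lam\<rceil> = real c" using cge3 unfolding c_def by simp
  have c3: "real c \<ge> 3" using cge3 cint by linarith
  have cpos: "real c > 0" using c3 by linarith
  have Jpos: "J \<ge> 1"
  proof (rule ccontr)
    assume "\<not> J \<ge> 1"
    then have J0: "J = 0" by simp
    have 1: "0 \<le> real (q + 1) * real N * exp (- real q * rho / 2)" by simp
    have 2: "real (q + 1) * real N * exp (- real q * rho / 2) < 0" using qbd J0 by simp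
    show False using 1 2 by linarith
  qed
  have Nreal: "real N \<ge> 6 / rho * ln (real c)"
  proof -
    have "6 / rho * ln (real c) \<le> of_int \<lceil>6 / rho * ln (real c)\<rceil>" by (rule le_of_int_ceiling)
    also have "\<dots> \<le> real (nat \<lceil>6 / rho * ln (real c)\<rceil>)" by simp
    finally show ?thesis using N cint by simp
  qed
  have Npos: "N \<ge> 1"
  proof -
    have "ln (real c) > 0" using c3 by simp
    then have "6 / rho * ln (real c) > 0" using rho by simp
    then have "real N > 0" using Nreal by linarith
    then show ?thesis by simp
  qed
  have \<tau>Ck: "Ck r \<tau>" using \<tau>D Dopen unfolding cr_open_def Cr_circle_def by auto
  have \<tau>d: "\<And>y. (\<tau> has_real_derivative deriv \<tau> y) (at y)"
    using Ck_deriv[OF \<tau>Ck] r by simp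
  have \<phi>d: "\<And>i y. (\<phi> i has_real_derivative deriv (\<phi> i) y) (at y)"
  proof -
    fix i y
    have "Ck 1 (\<phi> i)" using smooth unfolding Cinf_circle_def Cr_circle_def by blast
    then show "(\<phi> i has_real_derivative deriv (\<phi> i) y) (at y)" using Ck_deriv by blast
  qed
  define cube where "cube = {t::real^'m. \<forall>k. \<bar>t$k\<bar> \<le> 1}"
  define Bs where "Bs = {B. B \<subseteq> words l q \<and> card B = 2*(q+1)*N}"
  define P34 where "P34 = (\<lambda>x B'. \<forall>n\<ge>q. \<forall>A\<subseteq>words l n. bij_betw (trunc q) A B' \<longrightarrow>
               jac_aff A (Gmap El x A (\<lambda>_. 0) \<phi>) \<ge> 1)"
  define Bp where "Bp = (\<lambda>x B. SOME B'. B' \<subseteq> B \<and> card B' = N \<and> P34 x B')"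
  have Bp: "Bp x B \<subseteq> B \<and> card (Bp x B) = N \<and> P34 x (Bp x B)" if "x \<in> {0..<1}" "B \<in> Bs" for x B
  proof -
    have "N * (q + 1) \<le> 2 * (q + 1) * N" by simp
    then have "B \<subseteq> words l q \<and> card B \<ge> N * (q + 1)" using that(2) unfolding Bs_def by auto
    then have "\<exists>B'\<subseteq>B. card B' = N \<and> P34 x B'" using prop34 that(1) unfolding P34_def by blast
    then have "\<exists>B'. B' \<subseteq> B \<and> card B' = N \<and> P34 x B'" by blast
    then show ?thesis unfolding Bp_def by (rule someI_ex)
  qed
  define W where "W = (\<lambda>x j \<beta> n. {\<alpha>\<in>words l n. trunc q \<alpha> = \<beta> \<and>
      exp (a j * real n) \<le> deriv (El ^^ n) (pt El x \<alpha>) \<and> deriv (El ^^ n) (pt El x \<alpha>) \<le> exp (b j * real n)})"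
  define \<delta> where "\<delta> = (\<lambda>j (n::nat). exp (- a j * real n) * (R / (lam - 1)))"
  define cc where "cc = (\<lambda>x \<theta> \<alpha>. Sn El x \<alpha> \<tau> - tan \<theta>)"
  define g where "g = (\<lambda>x i \<alpha>. Sn El x \<alpha> (\<phi> i))"
  define Box where "Box = (\<lambda>x \<theta> j n A. {t::real^'m. (\<forall>i. \<bar>t$i\<bar> \<le> 1) \<and>
      (\<forall>\<alpha>\<in>A. \<bar>cc x \<theta> \<alpha> + (\<Sum>i\<in>UNIV. t$i * g x i \<alpha>)\<bar> \<le> \<delta> j n)})"
  define Mn where "Mn = (\<lambda>n::nat. exp (rho * real n) / real l ^ q / (2 * real J))"
  define Y where "Y = (\<lambda>x \<theta> j B n. {t\<in>cube. Mn n ^ N \<le>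
      (\<Sum>f\<in>PiE (Bp x B) (\<lambda>\<beta>. W x j \<beta> n). indicator (Box x \<theta> j n (f ` Bp x B)) t)})"
  define Yp where "Yp = (\<lambda>p n. Y (fst p) (fst (snd p)) (fst (snd (snd p))) (snd (snd (snd p))) n)"
  define Ix where "Ix = (\<lambda>n. Tset Lam n \<times> Thset Lam n \<times> {1..J} \<times> Bs)"
  define Z where "Z = (\<lambda>n. \<Union>p\<in>Ix n. Yp p n)"
  have finW: "finite (W x j \<beta> n)" for x j \<beta> n
    unfolding W_def using finite_words[of l n] by simp
  have Mnpos: "Mn n > 0" for n unfolding Mn_def using Jpos l by simp
  have \<delta>pos: "\<delta> j n \<ge> 0" for j n unfolding \<delta>_def using R lamgt by simp

  have claimA: "t \<in> Z n" if tc: "t \<in> cube" and tX: "perturb \<tau> \<phi> t \<in> Xset El l lam Lam D R rho J a b q N n" for t n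
  proof -
    have X1: "perturb \<tau> \<phi> t \<in> D \<and> (\<exists>x\<in>Tset Lam n. \<exists>\<theta>\<in>Thset Lam n. cos \<theta> \<noteq> 0 \<and>
        (\<exists>j\<in>{1..J}. \<exists>B Sg. B \<subseteq> words l q \<and> card B = 2 * (q + 1) * N \<and>
           (\<forall>\<beta>\<in>B. Sg \<beta> \<subseteq> words l n \<and>
               real (card (Sg \<beta>)) \<ge> exp (rho * real n) / real l ^ q / (2 * real J)) \<and>
           (\<forall>\<beta>\<in>B. \<forall>\<alpha>\<in>Sg \<beta>. trunc q \<alpha> = \<beta> \<and>
               exp (a j * real n) \<le> deriv (El ^^ n) (pt El x \<alpha>) \<and>
               deriv (El ^^ n) (pt El x \<alpha>) \<le> exp (b j * real n) \<and>
               \<bar>Sn El x \<alpha> (perturb \<tau> \<phi> t) - tan \<theta>\<bar> \<le> exp (- a j * real n) * (R / (lam - 1)))))"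
      using tX by (simp only: Xset_def mem_Collect_eq)
    then have "\<exists>x\<in>Tset Lam n. \<exists>\<theta>\<in>Thset Lam n. cos \<theta> \<noteq> 0 \<and>
        (\<exists>j\<in>{1..J}. \<exists>B Sg. B \<subseteq> words l q \<and> card B = 2 * (q + 1) * N \<and>
           (\<forall>\<beta>\<in>B. Sg \<beta> \<subseteq> words l n \<and>
               real (card (Sg \<beta>)) \<ge> exp (rho * real n) / real l ^ q / (2 * real J)) \<and>
           (\<forall>\<beta>\<in>B. \<forall>\<alpha>\<in>Sg \<beta>. trunc q \<alpha> = \<beta> \<and>
               exp (a j * real n) \<le> deriv (El ^^ n) (pt El x \<alpha>) \<and>
               deriv (El ^^ n) (pt El x \<alpha>) \<le> exp (b j * real n) \<and>
               \<bar>Sn El x \<alpha> (perturb \<tau> \<phi> t) - tan \<theta>\<bar> \<le> exp (- a j * real n) * (R / (lam - 1))))"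
      by (rule conjunct2)
    then obtain x \<theta> j B Sg where x: "x \<in> Tset Lam n" and th: "\<theta> \<in> Thset Lam n" and j: "j \<in> {1..J}"
      and BW: "B \<subseteq> words l q" and cB: "card B = 2 * (q + 1) * N"
      and Sg1: "\<forall>\<beta>\<in>B. Sg \<beta> \<subseteq> words l n \<and> real (card (Sg \<beta>)) \<ge> exp (rho * real n) / real l ^ q / (2 * real J)"
      and Sg2: "\<forall>\<beta>\<in>B. \<forall>\<alpha>\<in>Sg \<beta>. trunc q \<alpha> = \<beta> \<and>
               exp (a j * real n) \<le> deriv (El ^^ n) (pt El x \<alpha>) \<and>
               deriv (El ^^ n) (pt El x \<alpha>) \<le> exp (b j * real n) \<and>
               \<bar>Sn El x \<alpha> (perturb \<tau> \<phi> t) - tan \<theta>\<bar> \<le> exp (- a j * real n) * (R / (lam - 1))"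
      by blast
    have x01: "x \<in> {0..<1}" using x unfolding Tset_def by auto
    have BBs: "B \<in> Bs" unfolding Bs_def using BW cB by simp
    define B' where "B' = Bp x B"
    have B': "B' \<subseteq> B" "card B' = N" using Bp[OF x01 BBs] unfolding B'_def by auto
    have "B' \<subseteq> words l q" using B'(1) BW by blast
    then have finB': "finite B'" by (rule finite_subset[OF _ finite_words])
    have SgW: "Sg \<beta> \<subseteq> W x j \<beta> n" if "\<beta> \<in> B'" for \<beta>
    proof
      fix \<alpha> assume \<alpha>: "\<alpha> \<in> Sg \<beta>"
      have \<beta>B: "\<beta> \<in> B" using that B'(1) by blast
      have 1: "\<alpha> \<in> words l n" using Sg1 \<beta>B \<alpha> by blast
      have 2: "trunc q \<alpha> = \<beta> \<and> exp (a j * real n) \<le> deriv (El ^^ n) (pt El x \<alpha>) \<and>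
               deriv (El ^^ n) (pt El x \<alpha>) \<le> exp (b j * real n)"
        using Sg2 \<beta>B \<alpha> by blast
      show "\<alpha> \<in> W x j \<beta> n" unfolding W_def using 1 2 by simp
    qed
    have finSg: "finite (Sg \<beta>)" if "\<beta> \<in> B'" for \<beta> by (rule finite_subset[OF SgW[OF that] finW])
    have inBox: "t \<in> Box x \<theta> j n (f ` B')" if f: "f \<in> PiE B' Sg" for f
    proof -
      have "\<bar>cc x \<theta> \<alpha> + (\<Sum>i\<in>UNIV. t$i * g x i \<alpha>)\<bar> \<le> \<delta> j n" if "\<alpha> \<in> f ` B'" for \<alpha>
      proof -
        obtain \<beta> where \<beta>: "\<beta> \<in> B'" "\<alpha> = f \<beta>" using \<open>\<alpha> \<in> f ` B'\<close> by blast
        have \<alpha>S: "\<alpha> \<in> Sg \<beta>" using f \<beta> by (auto simp: PiE_def Pi_def)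
        have \<beta>B: "\<beta> \<in> B" using \<beta>(1) B'(1) by blast
        have "\<bar>Sn El x \<alpha> (perturb \<tau> \<phi> t) - tan \<theta>\<bar> \<le> exp (- a j * real n) * (R / (lam - 1))"
          using Sg2 \<beta>B \<alpha>S by blast
        then have "\<bar>Sn El x \<alpha> (perturb \<tau> \<phi> t) - tan \<theta>\<bar> \<le> \<delta> j n"
          unfolding \<delta>_def by simp
        then show ?thesis unfolding cc_def g_def using Sn_perturb[OF \<tau>d \<phi>d, where El=El and x=x and \<alpha>=\<alpha> and t=t]
          by (simp add: algebra_simps)
      qed
      moreover have "\<forall>i. \<bar>t$i\<bar> \<le> 1" using tc unfolding cube_def by simp
      ultimately show ?thesis unfolding Box_def by blast
    qed
    have "Mn n ^ N = (\<Prod>\<beta>\<in>B'. Mn n)" using B'(2) by simp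
    also have "\<dots> \<le> (\<Prod>\<beta>\<in>B'. real (card (Sg \<beta>)))"
      using Sg1 B'(1) Mnpos unfolding Mn_def by (intro prod_mono) (auto simp: less_imp_le)
    also have "\<dots> = real (card (PiE B' Sg))" by (simp add: card_PiE finB')
    also have "\<dots> = (\<Sum>f\<in>PiE B' Sg. indicator (Box x \<theta> j n (f ` B')) t)"
      using inBox by simp
    also have "\<dots> \<le> (\<Sum>f\<in>PiE B' (\<lambda>\<beta>. W x j \<beta> n). indicator (Box x \<theta> j n (f ` B')) t)"
    proof (rule sum_mono2)
      show "finite (PiE B' (\<lambda>\<beta>. W x j \<beta> n))" using finB' finW by (intro finite_PiE) auto
      show "PiE B' Sg \<subseteq> PiE B' (\<lambda>\<beta>. W x j \<beta> n)" using SgW by (intro PiE_mono) auto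
    qed simp
    finally have "t \<in> Y x \<theta> j B n" using tc unfolding Y_def B'_def by simp
    moreover have "(x, \<theta>, j, B) \<in> Ix n" unfolding Ix_def using x th j BBs by simp
    ultimately show ?thesis unfolding Z_def Yp_def by (intro UN_I[of "(x, \<theta>, j, B)"]) simp_all
  qed
  define K1 where "K1 = Cd * (2 * (R / (lam - 1))) * (real l ^ q * (2 * real J))"
  define Kb where "Kb = (2 * real CARD('m)) ^ CARD('m)"
  have K1pos: "K1 \<ge> 0" unfolding K1_def using Cd_pos R lamgt by simp
  have Kbpos: "Kb \<ge> 0" unfolding Kb_def by simp
  have Ybnd: "Y x \<theta> j B n \<in> sets lborel \<and>
      measure lborel (Y x \<theta> j B n) \<le> Kb * (K1 * exp (-(2*rho/3) * real n)) ^ N"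
    if xT: "x \<in> Tset Lam n" and jJ: "j \<in> {1..J}" and BB: "B \<in> Bs" for x \<theta> j B n
  proof -
    have x01: "x \<in> {0..<1}" using xT unfolding Tset_def by auto
    define B' where "B' = Bp x B"
    have B': "B' \<subseteq> B" "card B' = N" "P34 x B'" using Bp[OF x01 BB] unfolding B'_def by auto
    have BW: "B \<subseteq> words l q" using BB unfolding Bs_def by auto
    have "B' \<subseteq> words l q" using B'(1) BW by blast
    then have finB': "finite B'" by (rule finite_subset[OF _ finite_words])
    define PI where "PI = PiE B' (\<lambda>\<beta>. W x j \<beta> n)"
    have finPI: "finite PI" unfolding PI_def using finB' finW by (intro finite_PiE) auto
    have MnN: "Mn n ^ N > 0" using Mnpos by simp
    have Boxm: "Box x \<theta> j n A \<in> sets lborel" for A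
    proof -
      have "closed (Box x \<theta> j n A)" unfolding Box_def by (rule box_set_closed)
      then show ?thesis by simp
    qed
    have Boxc: "Box x \<theta> j n A \<subseteq> {t. \<forall>k. \<bar>t$k\<bar> \<le> 1}" for A unfolding Box_def by auto
    have Boxmeas: "measure lborel (Box x \<theta> j n (f ` B')) \<le> (2 * \<delta> j n) ^ N * Kb" if f: "f \<in> PI" for f
    proof -
      have fW: "f \<beta> \<in> W x j \<beta> n" if "\<beta> \<in> B'" for \<beta> using f that unfolding PI_def by auto
      have tr: "trunc q (f \<beta>) = \<beta>" if "\<beta> \<in> B'" for \<beta> using fW[OF that] unfolding W_def by auto
      have injf: "inj_on f B'"
      proof (rule inj_onI)
        fix u v assume "u \<in> B'" "v \<in> B'" "f u = f v"
        then show "u = v" using tr by metis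
      qed
      have cardA: "card (f ` B') = N" using card_image[OF injf] B'(2) by simp
      have AW: "f ` B' \<subseteq> words l n" using fW unfolding W_def by auto
      have bij: "bij_betw (trunc q) (f ` B') B'"
      proof (rule bij_betw_imageI)
        show "inj_on (trunc q) (f ` B')"
        proof (rule inj_onI)
          fix u v assume "u \<in> f ` B'" "v \<in> f ` B'" "trunc q u = trunc q v"
          then show "u = v" using tr by auto
        qed
        show "trunc q ` f ` B' = B'" using tr by (force simp: image_image)
      qed
      have nq: "n \<ge> q"
      proof -
        have "B' \<noteq> {}" using B'(2) Npos by auto
        then obtain \<beta> where \<beta>: "\<beta> \<in> B'" by blast
        have "length \<beta> = q" using \<beta> \<open>B' \<subseteq> words l q\<close> unfolding words_def by auto
        moreover have "length (f \<beta>) = n" using fW[OF \<beta>] unfolding W_def words_def by auto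
        ultimately have "n - (n - q) = q" using tr[OF \<beta>] unfolding trunc_def by (metis length_drop)
        then show ?thesis by arith
      qed
      have jac: "jac_aff (f ` B') (Gmap El x (f ` B') (\<lambda>_. 0) \<phi>) \<ge> 1"
        using B'(3) nq AW bij unfolding P34_def by blast
      have finA: "finite (f ` B')" using finB' by simp
      have "measure lborel (Box x \<theta> j n (f ` B')) \<le> (2 * \<delta> j n) ^ card (f ` B') * Kb"
        unfolding Box_def Kb_def g_def
        by (rule box_measure[OF finA jac_imp(1)[OF \<phi>d jac] jac_imp(2)[OF \<phi>d jac] \<delta>pos])
      then show ?thesis using cardA by simp
    qed
    have Yeq: "Y x \<theta> j B n = {t\<in>{t. \<forall>k. \<bar>t$k\<bar> \<le> 1}. Mn n ^ N \<le> (\<Sum>f\<in>PI. indicator (Box x \<theta> j n (f ` B')) t)}"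
      unfolding Y_def cube_def PI_def B'_def by simp
    have Ym: "Y x \<theta> j B n \<in> sets lborel"
      unfolding Yeq by (rule markov_ind(1)[OF finPI Boxm Boxc MnN])
    have "measure lborel (Y x \<theta> j B n) \<le> (\<Sum>f\<in>PI. measure lborel (Box x \<theta> j n (f ` B'))) / Mn n ^ N"
      unfolding Yeq by (rule markov_ind(2)[OF finPI Boxm Boxc MnN])
    also have "\<dots> \<le> (\<Sum>f\<in>PI. (2 * \<delta> j n) ^ N * Kb) / Mn n ^ N"
      using MnN by (intro divide_right_mono sum_mono Boxmeas) auto
    also have "\<dots> = real (card PI) * ((2 * \<delta> j n) ^ N * Kb) / Mn n ^ N" by simp
    also have "\<dots> \<le> (Cd * exp (b j * real n)) ^ N * ((2 * \<delta> j n) ^ N * Kb) / Mn n ^ N"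
    proof -
      have "real (card PI) = (\<Prod>\<beta>\<in>B'. real (card (W x j \<beta> n)))"
        unfolding PI_def by (simp add: card_PiE finB')
      also have "\<dots> \<le> (\<Prod>\<beta>\<in>B'. Cd * exp (b j * real n))"
      proof (rule prod_mono)
        fix \<beta> assume "\<beta> \<in> B'"
        have "W x j \<beta> n \<subseteq> {\<alpha>\<in>words l n. deriv (El ^^ n) (pt El x \<alpha>) \<le> exp (b j * real n)}"
          unfolding W_def by auto
        then have "card (W x j \<beta> n) \<le> card {\<alpha>\<in>words l n. deriv (El ^^ n) (pt El x \<alpha>) \<le> exp (b j * real n)}"
          by (rule card_mono[rotated]) (simp add: finite_words)
        then have "real (card (W x j \<beta> n)) \<le> real (card {\<alpha>\<in>words l n. deriv (El ^^ n) (pt El x \<alpha>) \<le> exp (b j * real n)})"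
          by simp
        also have "\<dots> \<le> exp (b j * real n) * Cd" by (rule count_le[OF x01]) simp
        finally show "0 \<le> real (card (W x j \<beta> n)) \<and> real (card (W x j \<beta> n)) \<le> Cd * exp (b j * real n)"
          by (simp add: mult.commute)
      qed
      also have "\<dots> = (Cd * exp (b j * real n)) ^ N" using B'(2) by simp
      finally have "real (card PI) \<le> (Cd * exp (b j * real n)) ^ N" .
      then show ?thesis using MnN \<delta>pos Kbpos
        by (intro divide_right_mono mult_right_mono) auto
    qed
    also have "\<dots> = Kb * ((Cd * exp (b j * real n)) * (2 * \<delta> j n) / Mn n) ^ N"
      by (simp add: power_mult_distrib power_divide)
    also have "\<dots> \<le> Kb * (K1 * exp (-(2*rho/3) * real n)) ^ N"
    proof -
      have e: "exp ((b j - a j - rho) * real n) = exp (b j * real n) * exp (- a j * real n) / exp (rho * real n)"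
      proof -
        have "(b j - a j - rho) * real n = b j * real n + (- a j * real n) - rho * real n"
          by (simp add: algebra_simps)
        then show ?thesis by (simp only: exp_diff exp_add)
      qed
      have lq: "real l ^ q > 0" using l by simp
      have lam0: "lam - 1 > 0" using lamgt by simp
      have Jr: "real J > 0" using Jpos by simp
      have r: "(Cd * exp (b j * real n)) * (2 * \<delta> j n) / Mn n = K1 * exp ((b j - a j - rho) * real n)"
        unfolding e K1_def \<delta>_def Mn_def using lq lam0 Jr by (simp add: field_simps)
      have "(b j - a j - rho) * real n \<le> (-(2*rho/3)) * real n"
      proof (rule mult_right_mono)
        have "b j - a j < rho / 3" using short jJ by blast
        then show "b j - a j - rho \<le> -(2*rho/3)" by linarith
      qed simp
      then have "exp ((b j - a j - rho) * real n) \<le> exp (-(2*rho/3) * real n)" by simp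
      then have "K1 * exp ((b j - a j - rho) * real n) \<le> K1 * exp (-(2*rho/3) * real n)"
        using K1pos by (rule mult_left_mono)
      moreover have "0 \<le> K1 * exp ((b j - a j - rho) * real n)" using K1pos by simp
      ultimately have "(K1 * exp ((b j - a j - rho) * real n)) ^ N \<le> (K1 * exp (-(2*rho/3) * real n)) ^ N"
        by (intro power_mono)
      then show ?thesis unfolding r using Kbpos by (rule mult_left_mono)
    qed
    finally show ?thesis using Ym by simp
  qed
  have finIx: "finite (Ix n)" for n
  proof -
    have "finite Bs" unfolding Bs_def
      by (rule finite_subset[of _ "Pow (words l q)"]) (auto simp: finite_words)
    then show ?thesis unfolding Ix_def
      using Tset_card[of Lam n] Thset_card[of Lam n] cge3 by auto
  qed
  define KZ where "KZ = real J * real (card Bs) * Kb * K1 ^ N"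
  have Zm: "Z n \<in> sets lborel" for n
    unfolding Z_def Yp_def using Ybnd by (intro sets.finite_UN finIx) (auto simp: Ix_def)
  have Zc: "Z n \<subseteq> cube" for n unfolding Z_def Yp_def Y_def by auto
  have Zbnd: "measure lborel (Z n) \<le> KZ * (1 / real c ^ 2) ^ n" for n
  proof -
    have "measure lborel (Z n) \<le> (\<Sum>p\<in>Ix n. measure lborel (Yp p n))"
      unfolding Z_def using Ybnd by (intro measure_UNION_le finIx) (auto simp: Ix_def Yp_def)
    also have "\<dots> \<le> (\<Sum>p\<in>Ix n. Kb * (K1 * exp (-(2*rho/3) * real n)) ^ N)"
      using Ybnd by (intro sum_mono) (auto simp: Ix_def Yp_def)
    also have "\<dots> = real (card (Ix n)) * (Kb * (K1 * exp (-(2*rho/3) * real n)) ^ N)" by simp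
    also have "\<dots> \<le> (real c ^ n * real c ^ n * real J * real (card Bs)) * (Kb * K1 ^ N * (1 / real c ^ 4) ^ n)"
    proof (rule mult_mono)
      have T: "real (card (Tset Lam n)) \<le> real c ^ n" using Tset_card[of Lam n] cge3 unfolding c_def by auto
      have Th: "real (card (Thset Lam n)) \<le> real c ^ n" using Thset_card[of Lam n] cge3 unfolding c_def by auto
      have "real (card (Ix n)) = real (card (Tset Lam n)) * real (card (Thset Lam n)) * real J * real (card Bs)"
        unfolding Ix_def by (simp add: card_cartesian_product)
      also have "\<dots> \<le> real c ^ n * real c ^ n * real J * real (card Bs)"
        using T Th by (intro mult_right_mono mult_mono) auto
      finally show "real (card (Ix n)) \<le> real c ^ n * real c ^ n * real J * real (card Bs)" .
      have "exp (-(2*rho/3) * real n) ^ N \<le> (1 / real c ^ 4) ^ n"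
        by (rule exp_bound[OF rho c3 Nreal])
      then have "K1 ^ N * exp (-(2*rho/3) * real n) ^ N \<le> K1 ^ N * (1 / real c ^ 4) ^ n"
        using K1pos by (intro mult_left_mono) auto
      then show "Kb * (K1 * exp (-(2*rho/3) * real n)) ^ N \<le> Kb * K1 ^ N * (1 / real c ^ 4) ^ n"
        using Kbpos by (simp add: power_mult_distrib mult.assoc mult_left_mono)
    qed (use Kbpos K1pos in auto)
    also have "\<dots> = KZ * (1 / real c ^ 2) ^ n"
    proof -
      have "real c ^ n * real c ^ n * (1 / real c ^ 4) ^ n = (1 / real c ^ 2) ^ n"
      proof -
        have "real c ^ n * real c ^ n * (1 / real c ^ 4) ^ n = (real c * real c * (1 / real c ^ 4)) ^ n"
          by (simp only: power_mult_distrib)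
        also have "real c * real c * (1 / real c ^ 4) = 1 / real c ^ 2"
          using cpos by (simp add: field_simps power2_eq_square power4_eq_xxxx)
        finally show ?thesis .
      qed
      then show ?thesis unfolding KZ_def by (simp add: algebra_simps)
    qed
    finally show ?thesis .
  qed
  have Zfin: "emeasure lborel (Z n) < \<infinity>" for n
    using Zm Zc unfolding cube_def by (intro cube_finite_measure) auto
  have summ: "summable (\<lambda>n. measure lborel (Z n))"
  proof (rule summable_comparison_test')
    show "summable (\<lambda>n. KZ * (1 / real c ^ 2) ^ n)"
      using c3 by (intro summable_mult summable_geometric) auto
    show "norm (measure lborel (Z n)) \<le> KZ * (1 / real c ^ 2) ^ n" for n
      using Zbnd[of n] by simp
  qed
  have null: "limsup Z \<in> null_sets lborel"
    by (rule borel_cantelli_limsup1[OF Zm Zfin summ])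
  have sub: "{t :: real^'m. (\<forall>i. \<bar>t $ i\<bar> \<le> 1) \<and>
            infinite {n. perturb \<tau> \<phi> t \<in> Xset El l lam Lam D R rho J a b q N n}} \<subseteq> limsup Z"
  proof
    fix t assume t: "t \<in> {t :: real^'m. (\<forall>i. \<bar>t $ i\<bar> \<le> 1) \<and>
            infinite {n. perturb \<tau> \<phi> t \<in> Xset El l lam Lam D R rho J a b q N n}}"
    then have tc: "t \<in> cube" unfolding cube_def by simp
    have inf: "infinite {n. perturb \<tau> \<phi> t \<in> Xset El l lam Lam D R rho J a b q N n}" using t by simp
    show "t \<in> limsup Z"
      unfolding limsup_INF_SUP
    proof (intro INT_I)
      fix m :: nat
      obtain k where k: "k \<ge> m" "perturb \<tau> \<phi> t \<in> Xset El l lam Lam D R rho J a b q N k"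
        using inf unfolding infinite_nat_iff_unbounded_le by blast
      then have "t \<in> Z k" using claimA[OF tc] by blast
      then show "t \<in> (\<Union>n\<in>{m..}. Z n)" using k(1) by blast
    qed
  qed
  have "limsup Z \<in> null_sets lebesgue" using null by (rule null_sets_completionI)
  then show "{t :: real^'m. (\<forall>i. \<bar>t $ i\<bar> \<le> 1) \<and>
            infinite {n. perturb \<tau> \<phi> t \<in> Xset El l lam Lam D R rho J a b q N n}}
          \<in> null_sets lebesgue"
    by (rule null_sets_completion_subset[OF sub])
qed

end
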